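(* Let $\lambda\in\mathbb C$ and put $(\lambda_i,\beta_i)=\Phi^i(\lambda,0)$ for $i\ge 0$ (so $\lambda_0=\lambda$, $\beta_0=0$). Let $n\ge 0$ and suppose that the weights $(\lambda_0,\beta_0),\dots,(\lambda_n,\beta_n)$ are pairwise distinct, $\beta_i\neq 0$ for $1\le i\le n$, and $\beta_{n+1}=0$. Let $F_{\mathrm{hw}}(\lambda)$ be the $(n+1)$-dimensional $L$-module with basis $v_0,\dots,v_n$ and action $hv_i=\lambda_i v_i$ $(0\le i\le n)$; $dv_0=0$, $dv_i=\beta_i v_{i-1}$ $(1\le i\le n)$; $uv_n=0$, $uv_i=v_{i+1}$ $(0\le i\le n-1)$ (this is a simple $L$-module). Let $J_\lambda=\{f(h,ud)\in L_0: f\in\mathbb C[x,y],\ f(\lambda_i,\beta_i)=0 \text{ for } 0\le i\le n\}$. Then the annihilator of $F_{\mathrm{hw}}(\lambda)$ in $L$ is the two-sided ideal $\langle u^{n+1}, d^{n+1}, J_\lambda\rangle$.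
   Context: Let $r,s,\gamma\in\mathbb C$ with $rs\neq 0$ and $\phi\in\mathbb C[x]$. The generalized down-up algebra $L=L(\phi,r,s,\gamma)$ is the associative $\mathbb C$-algebra generated by $u,d,h$ subject to $hu-ruh=\gamma u$, $dh-rhd=\gamma d$, $du-sud=\phi(h)$; it is a noetherian domain with $\mathbb C$-basis $\{u^ih^jd^k: i,j,k\ge 0\}$. $L$ is $\mathbb Z$-graded by $\deg u=1$, $\deg d=-1$, $\deg h=0$; $L_i$ denotes the degree-$i$ component, and $L_0$ is the polynomial algebra $\mathbb C[h,ud]$ in the commuting elements $h$ and $ud$. $\langle a_1,\dots,a_k\rangle$ denotes the two-sided ideal generated by the listed elements (or sets). The map $\Phi:\mathbb C^2\to\mathbb C^2$ is $\Phi(\lambda,\beta)=(r\lambda+\gamma,\ s\beta+\phi(\lambda))$. *)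

theory Defs
  imports Complex_Main "HOL-Computational_Algebra.Polynomial"
begin

text \<open>The generalized down-up algebra L is presented as the free associative
algebra on three generators modulo the defining relations.  Elements of the
free algebra are finitely supported coefficient functions on words.\<close>

datatype gen = U | D | H

type_synonym fa = "gen list \<Rightarrow> complex"

definition fa_finite :: "fa \<Rightarrow> bool" where
  "fa_finite x \<longleftrightarrow> finite {w. x w \<noteq> 0}"

definition fa_zero :: fa where
  "fa_zero = (\<lambda>_. 0)"

definition fa_add :: "fa \<Rightarrow> fa \<Rightarrow> fa" where
  "fa_add x y = (\<lambda>w. x w + y w)"

definition fa_smult :: "complex \<Rightarrow> fa \<Rightarrow> fa" where
  "fa_smult c x = (\<lambda>w. c * x w)"

definition fa_mul :: "fa \<Rightarrow> fa \<Rightarrow> fa" where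
  "fa_mul x y = (\<lambda>w. \<Sum>i\<le>length w. x (take i w) * y (drop i w))"

definition fa_word :: "gen list \<Rightarrow> fa" where
  "fa_word v = (\<lambda>w. if w = v then 1 else 0)"

definition fa_poly_h :: "complex poly \<Rightarrow> fa" where
  "fa_poly_h p = (\<lambda>w. if w = replicate (length w) H then coeff p (length w) else 0)"

text \<open>Bivariate polynomials f in C[x,y] are represented as complex poly poly:
the outer variable is y, the inner one is x, so f = sum_k (coeff f k)(x) y^k.
fa_biv f is the element f(h, ud) = sum_{j,k} c_{jk} h^j (ud)^k.\<close>
definition fa_biv :: "complex poly poly \<Rightarrow> fa" where
  "fa_biv f = (\<lambda>w. \<Sum>k\<le>degree f. \<Sum>j\<le>degree (coeff f k).
      if w = replicate j H @ concat (replicate k [U, D]) then coeff (coeff f k) j else 0)"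

definition poly2 :: "complex poly poly \<Rightarrow> complex \<Rightarrow> complex \<Rightarrow> complex" where
  "poly2 f a b = poly (poly f [:b:]) a"

inductive_set fa_ideal :: "fa set \<Rightarrow> fa set" for G :: "fa set" where
  zero: "fa_zero \<in> fa_ideal G"
| gen: "g \<in> G \<Longrightarrow> fa_finite a \<Longrightarrow> fa_finite b \<Longrightarrow> fa_mul (fa_mul a g) b \<in> fa_ideal G"
| add: "x \<in> fa_ideal G \<Longrightarrow> y \<in> fa_ideal G \<Longrightarrow> fa_add x y \<in> fa_ideal G"

definition dua_rels :: "complex \<Rightarrow> complex \<Rightarrow> complex \<Rightarrow> complex poly \<Rightarrow> fa set" where
  "dua_rels r s \<gamma> \<phi> =
    { fa_add (fa_word [H,U]) (fa_add (fa_smult (-r) (fa_word [U,H])) (fa_smult (-\<gamma>) (fa_word [U]))),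
      fa_add (fa_word [D,H]) (fa_add (fa_smult (-r) (fa_word [H,D])) (fa_smult (-\<gamma>) (fa_word [D]))),
      fa_add (fa_word [D,U]) (fa_add (fa_smult (-s) (fa_word [U,D])) (fa_smult (-1) (fa_poly_h \<phi>))) }"

definition Phi :: "complex \<Rightarrow> complex \<Rightarrow> complex \<Rightarrow> complex poly \<Rightarrow> complex \<times> complex \<Rightarrow> complex \<times> complex" where
  "Phi r s \<gamma> \<phi> = (\<lambda>(l, b). (r * l + \<gamma>, s * b + poly \<phi> l))"

definition wt :: "complex \<Rightarrow> complex \<Rightarrow> complex \<Rightarrow> complex poly \<Rightarrow> complex \<Rightarrow> nat \<Rightarrow> complex \<times> complex" where
  "wt r s \<gamma> \<phi> lam i = (Phi r s \<gamma> \<phi> ^^ i) (lam, 0)"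

text \<open>Vectors of F_hw(lambda) are coefficient functions on the basis v_0..v_n
(coefficients at indices > n are zero).\<close>
definition act_gen :: "complex \<Rightarrow> complex \<Rightarrow> complex \<Rightarrow> complex poly \<Rightarrow> complex \<Rightarrow> nat \<Rightarrow> gen
    \<Rightarrow> (nat \<Rightarrow> complex) \<Rightarrow> (nat \<Rightarrow> complex)" where
  "act_gen r s \<gamma> \<phi> lam n g v = (case g of
      U \<Rightarrow> (\<lambda>j. if 1 \<le> j \<and> j \<le> n then v (j - 1) else 0)
    | D \<Rightarrow> (\<lambda>j. if j < n then snd (wt r s \<gamma> \<phi> lam (Suc j)) * v (Suc j) else 0)
    | H \<Rightarrow> (\<lambda>j. if j \<le> n then fst (wt r s \<gamma> \<phi> lam j) * v j else 0))"

definition act_word :: "complex \<Rightarrow> complex \<Rightarrow> complex \<Rightarrow> complex poly \<Rightarrow> complex \<Rightarrow> nat \<Rightarrow> gen list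
    \<Rightarrow> (nat \<Rightarrow> complex) \<Rightarrow> (nat \<Rightarrow> complex)" where
  "act_word r s \<gamma> \<phi> lam n w = foldr (\<lambda>g f. act_gen r s \<gamma> \<phi> lam n g \<circ> f) w id"

definition act :: "complex \<Rightarrow> complex \<Rightarrow> complex \<Rightarrow> complex poly \<Rightarrow> complex \<Rightarrow> nat \<Rightarrow> fa
    \<Rightarrow> (nat \<Rightarrow> complex) \<Rightarrow> (nat \<Rightarrow> complex)" where
  "act r s \<gamma> \<phi> lam n x v = (\<lambda>j. \<Sum>w\<in>{w. x w \<noteq> 0}. x w * act_word r s \<gamma> \<phi> lam n w v j)"

text \<open>Preimage in the free algebra of the annihilator of F_hw(lambda) in L.\<close>
definition ann_Fhw :: "complex \<Rightarrow> complex \<Rightarrow> complex \<Rightarrow> complex poly \<Rightarrow> complex \<Rightarrow> nat \<Rightarrow> fa set" where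
  "ann_Fhw r s \<gamma> \<phi> lam n = {x. fa_finite x \<and>
      (\<forall>v. (\<forall>j>n. v j = 0) \<longrightarrow> act r s \<gamma> \<phi> lam n x v = (\<lambda>_. 0))}"

end

theory Submission
  imports Defs
begin



lemma fa_mul_assoc: "fa_mul (fa_mul x y) z = fa_mul x (fa_mul y z)"
proof (rule ext)
  fix w :: "gen list"
  define N where "N = length w"
  define T where "T j k = x (take j w) * y (take k (drop j w)) * z (drop (j+k) w)" for j k
  have L: "fa_mul (fa_mul x y) z w = (\<Sum>i\<le>N. \<Sum>j\<le>i. T j (i - j))"
    unfolding fa_mul_def N_def T_def
    by (rule sum.cong[OF refl]) (auto simp: sum_distrib_right drop_take min_def intro!: sum.cong)
  have R: "fa_mul x (fa_mul y z) w = (\<Sum>j\<le>N. \<Sum>k\<le>N - j. T j k)"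
    unfolding fa_mul_def N_def T_def
    by (rule sum.cong[OF refl]) (auto simp: sum_distrib_left mult.assoc add.commute intro!: sum.cong)
  have "(\<Sum>j\<le>N. \<Sum>k\<le>N - j. T j k) = (\<Sum>(j,k)\<in>{(j,k). j + k \<le> N}. T j k)"
  proof -
    have e: "{(j,k). j + k \<le> N} = Sigma {..N} (\<lambda>j. {..N - j})" by auto
    show ?thesis unfolding e by (subst sum.Sigma) auto
  qed
  also have "\<dots> = (\<Sum>i\<le>N. \<Sum>j\<le>i. T j (i - j))" by (rule sum.triangle_reindex_eq)
  finally show "fa_mul (fa_mul x y) z w = fa_mul x (fa_mul y z) w" using L R by simp
qed




lemma fa_mul_add_left: "fa_mul (fa_add x y) z = fa_add (fa_mul x z) (fa_mul y z)"
  by (auto simp: fa_mul_def fa_add_def distrib_right sum.distrib)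
lemma fa_mul_add_right: "fa_mul x (fa_add y z) = fa_add (fa_mul x y) (fa_mul x z)"
  by (auto simp: fa_mul_def fa_add_def distrib_left sum.distrib)
lemma fa_mul_smult_left: "fa_mul (fa_smult c x) z = fa_smult c (fa_mul x z)"
  by (auto simp: fa_mul_def fa_smult_def sum_distrib_left mult.assoc)
lemma fa_mul_smult_right: "fa_mul x (fa_smult c z) = fa_smult c (fa_mul x z)"
  by (auto simp: fa_mul_def fa_smult_def sum_distrib_left mult.assoc mult.left_commute)
lemma fa_mul_zero_left: "fa_mul fa_zero z = fa_zero"
  by (auto simp: fa_mul_def fa_zero_def)
lemma fa_mul_zero_right: "fa_mul z fa_zero = fa_zero"
  by (auto simp: fa_mul_def fa_zero_def)

lemma fa_mul_one_left: "fa_mul (fa_word []) x = x"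
proof (rule ext)
  fix w :: "gen list"
  have "fa_mul (fa_word []) x w = (\<Sum>i\<le>length w. if i = 0 then x w else 0)"
    unfolding fa_mul_def fa_word_def by (rule sum.cong) auto
  thus "fa_mul (fa_word []) x w = x w" by simp
qed

lemma fa_mul_one_right: "fa_mul x (fa_word []) = x"
proof (rule ext)
  fix w :: "gen list"
  have "fa_mul x (fa_word []) w = (\<Sum>i\<le>length w. if i = length w then x w else 0)"
    unfolding fa_mul_def fa_word_def by (rule sum.cong) auto
  thus "fa_mul x (fa_word []) w = x w" by simp
qed

lemma fa_word_mul: "fa_mul (fa_word v) (fa_word u) = fa_word (v @ u)"
proof (rule ext)
  fix w :: "gen list"
  have "fa_mul (fa_word v) (fa_word u) w = (\<Sum>i\<le>length w. if i = length v then (if w = v @ u then 1 else 0) else 0)"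
    unfolding fa_mul_def fa_word_def
  proof (rule sum.cong[OF refl])
    fix i assume i: "i \<in> {..length w}"
    have "(take i w = v \<and> drop i w = u) \<longleftrightarrow> (i = length v \<and> w = v @ u)"
    proof
      assume h: "take i w = v \<and> drop i w = u"
      hence "w = v @ u" by (metis append_take_drop_id)
      moreover have "length v = i" using h i by auto
      ultimately show "i = length v \<and> w = v @ u" by simp
    qed auto
    hence e2: "(if take i w = v \<and> drop i w = u then 1 else (0::complex)) = (if i = length v \<and> w = v @ u then 1 else 0)"
      by presburger
    have "(if take i w = v then 1 else 0) * (if drop i w = u then 1 else 0) =
          (if take i w = v \<and> drop i w = u then 1 else (0::complex))" by auto
    also note e2
    finally show "(if take i w = v then 1 else 0) * (if drop i w = u then 1 else 0) =
          (if i = length v then if w = v @ u then 1 else 0 else (0::complex))"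
      by auto
  qed
  also have "\<dots> = fa_word (v @ u) w"
    by (auto simp: fa_word_def)
  finally show "fa_mul (fa_word v) (fa_word u) w = fa_word (v @ u) w" .
qed



lemma fa_finite_zero: "fa_finite fa_zero" by (simp add: fa_finite_def fa_zero_def)
lemma fa_finite_add: "fa_finite x \<Longrightarrow> fa_finite y \<Longrightarrow> fa_finite (fa_add x y)"
  unfolding fa_finite_def fa_add_def
  by (rule finite_subset[of _ "{w. x w \<noteq> 0} \<union> {w. y w \<noteq> 0}"]) auto
lemma fa_finite_smult: "fa_finite x \<Longrightarrow> fa_finite (fa_smult c x)"
  unfolding fa_finite_def fa_smult_def
  by (rule finite_subset[of _ "{w. x w \<noteq> 0}"]) auto
lemma fa_finite_word: "fa_finite (fa_word v)"
  unfolding fa_finite_def fa_word_def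
  by (rule finite_subset[of _ "{v}"]) auto


lemma fa_finite_mul: "fa_finite x \<Longrightarrow> fa_finite y \<Longrightarrow> fa_finite (fa_mul x y)"
  unfolding fa_finite_def
proof (rule finite_subset[of _ "(\<lambda>(a,b). a @ b) ` ({w. x w \<noteq> 0} \<times> {w. y w \<noteq> 0})"])
  show "{w. fa_mul x y w \<noteq> 0} \<subseteq> (\<lambda>(a,b). a @ b) ` ({w. x w \<noteq> 0} \<times> {w. y w \<noteq> 0})"
  proof
    fix w assume "w \<in> {w. fa_mul x y w \<noteq> 0}"
    hence "(\<Sum>i\<le>length w. x (take i w) * y (drop i w)) \<noteq> 0" unfolding fa_mul_def by simp
    then obtain i where "x (take i w) * y (drop i w) \<noteq> 0"
      by (meson sum.not_neutral_contains_not_neutral)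
    hence "(take i w, drop i w) \<in> {w. x w \<noteq> 0} \<times> {w. y w \<noteq> 0}" by auto
    moreover have "w = (\<lambda>(a,b). a @ b) (take i w, drop i w)" by simp
    ultimately show "w \<in> (\<lambda>(a,b). a @ b) ` ({w. x w \<noteq> 0} \<times> {w. y w \<noteq> 0})"
      by blast
  qed
next
  assume "finite {w. x w \<noteq> 0}" "finite {w. y w \<noteq> 0}"
  thus "finite ((\<lambda>(a,b). a @ b) ` ({w. x w \<noteq> 0} \<times> {w. y w \<noteq> 0}))" by simp
qed


lemma if_ne0: "(if P then a else 0) \<noteq> (0::'a::zero) \<Longrightarrow> P \<and> a \<noteq> 0"
  by (cases P) simp_all
lemma fa_finite_poly_h: "fa_finite (fa_poly_h p)"
  unfolding fa_finite_def
proof (rule finite_subset[of _ "(\<lambda>k. replicate k H) ` {..degree p}"])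
  show "{w. fa_poly_h p w \<noteq> 0} \<subseteq> (\<lambda>k. replicate k H) ` {..degree p}"
  proof
    fix w assume "w \<in> {w. fa_poly_h p w \<noteq> 0}"
    hence "(if w = replicate (length w) H then coeff p (length w) else 0) \<noteq> 0"
      by (simp add: fa_poly_h_def)
    hence "w = replicate (length w) H" "coeff p (length w) \<noteq> 0"
      by (blast dest: if_ne0)+
    moreover from this have "length w \<le> degree p" by (intro le_degree)
    ultimately show "w \<in> (\<lambda>k. replicate k H) ` {..degree p}" by blast
  qed
qed auto


lemma fa_finite_biv: "fa_finite (fa_biv f)"
  unfolding fa_finite_def
proof (rule finite_subset[of _ "\<Union>k\<le>degree f. \<Union>j\<le>degree (coeff f k). {replicate j H @ concat (replicate k [U, D])}"])
  show "{w. fa_biv f w \<noteq> 0} \<subseteq> (\<Union>k\<le>degree f. \<Union>j\<le>degree (coeff f k). {replicate j H @ concat (replicate k [U, D])})"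
  proof
    fix w assume "w \<in> {w. fa_biv f w \<noteq> 0}"
    hence "(\<Sum>k\<le>degree f. \<Sum>j\<le>degree (coeff f k). if w = replicate j H @ concat (replicate k [U, D]) then coeff (coeff f k) j else 0) \<noteq> 0"
      unfolding fa_biv_def by (simp only: mem_Collect_eq not_False_eq_True)
    then obtain k where k: "k \<in> {..degree f}" "(\<Sum>j\<le>degree (coeff f k). if w = replicate j H @ concat (replicate k [U, D]) then coeff (coeff f k) j else 0) \<noteq> 0"
      by (rule sum.not_neutral_contains_not_neutral)
    from k(2) obtain j where j: "j \<in> {..degree (coeff f k)}" "(if w = replicate j H @ concat (replicate k [U, D]) then coeff (coeff f k) j else 0) \<noteq> 0"
      by (rule sum.not_neutral_contains_not_neutral)
    hence "w = replicate j H @ concat (replicate k [U, D])" by (blast dest: if_ne0)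
    with k j(1) show "w \<in> (\<Union>k\<le>degree f. \<Union>j\<le>degree (coeff f k). {replicate j H @ concat (replicate k [U, D])})" by blast
  qed
qed (intro finite_UN_I finite_atMost finite.intros)




typedef ffa = "{x::fa. fa_finite x}" morphisms rep Abs_ffa
  by (rule exI[of _ fa_zero]) (simp add: fa_finite_zero)

setup_lifting type_definition_ffa

instantiation ffa :: ring_1
begin
lift_definition zero_ffa :: ffa is fa_zero by (simp add: fa_finite_zero)
lift_definition one_ffa :: ffa is "fa_word []" by (simp add: fa_finite_word)
lift_definition plus_ffa :: "ffa \<Rightarrow> ffa \<Rightarrow> ffa" is fa_add by (simp add: fa_finite_add)
lift_definition uminus_ffa :: "ffa \<Rightarrow> ffa" is "fa_smult (-1)" by (simp add: fa_finite_smult)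
lift_definition minus_ffa :: "ffa \<Rightarrow> ffa \<Rightarrow> ffa" is "\<lambda>x y. fa_add x (fa_smult (-1) y)"
  by (simp add: fa_finite_smult fa_finite_add)
lift_definition times_ffa :: "ffa \<Rightarrow> ffa \<Rightarrow> ffa" is fa_mul by (simp add: fa_finite_mul)
instance
proof
  fix a b c :: ffa
  show "a + b + c = a + (b + c)" by transfer (auto simp: fa_add_def)
  show "a + b = b + a" by transfer (auto simp: fa_add_def)
  show "0 + a = a" by transfer (auto simp: fa_add_def fa_zero_def)
  show "- a + a = 0" by transfer (auto simp: fa_add_def fa_zero_def fa_smult_def)
  show "a - b = a + - b" by transfer simp
  show "a * b * c = a * (b * c)" by transfer (rule fa_mul_assoc)
  show "1 * a = a" by transfer (rule fa_mul_one_left)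
  show "a * 1 = a" by transfer (rule fa_mul_one_right)
  show "(a + b) * c = a * c + b * c" by transfer (rule fa_mul_add_left)
  show "a * (b + c) = a * b + a * c" by transfer (rule fa_mul_add_right)
  show "(0::ffa) \<noteq> 1" proof transfer
    show "fa_zero \<noteq> fa_word []" by (metis fa_zero_def fa_word_def zero_neq_one)
  qed
qed
end

lift_definition sc :: "complex \<Rightarrow> ffa \<Rightarrow> ffa" is fa_smult by (simp add: fa_finite_smult)
lift_definition wd :: "gen list \<Rightarrow> ffa" is fa_word by (simp add: fa_finite_word)
lift_definition ph :: "complex poly \<Rightarrow> ffa" is fa_poly_h by (simp add: fa_finite_poly_h)
lift_definition bv :: "complex poly poly \<Rightarrow> ffa" is fa_biv by (simp add: fa_finite_biv)

lemma sc_mult_left[simp]: "sc c x * y = sc c (x * y)"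
  by transfer (rule fa_mul_smult_left)
lemma sc_mult_right[simp]: "x * sc c y = sc c (x * y)"
  by transfer (rule fa_mul_smult_right)
lemma sc_sc[simp]: "sc c (sc d x) = sc (c * d) x"
  by transfer (auto simp: fa_smult_def)
lemma sc_add[simp]: "sc c (x + y) = sc c x + sc c y"
  by transfer (auto simp: fa_smult_def fa_add_def distrib_left)
lemma sc_add2: "sc (c + d) x = sc c x + sc d x"
  by transfer (auto simp: fa_smult_def fa_add_def distrib_right)
lemma sc_one[simp]: "sc 1 x = x"
  by transfer (auto simp: fa_smult_def)
lemma sc_zero[simp]: "sc 0 x = 0"
  by transfer (auto simp: fa_smult_def fa_zero_def)
lemma sc_zero2[simp]: "sc c 0 = 0"
  by transfer (auto simp: fa_smult_def fa_zero_def)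
lemma sc_minus[simp]: "sc c (- x) = - sc c x"
  by transfer (auto simp: fa_smult_def)
lemma sc_diff[simp]: "sc c (x - y) = sc c x - sc c y"
  by transfer (auto simp: fa_smult_def fa_add_def algebra_simps)
lemma sc_neg: "sc (- c) x = - sc c x"
  by transfer (auto simp: fa_smult_def)
lemma sc_diff2: "sc (c - d) x = sc c x - sc d x"
  by transfer (auto simp: fa_smult_def fa_add_def algebra_simps)
lemma sc_sum: "sc c (sum f A) = (\<Sum>a\<in>A. sc c (f a))"
  by (induction A rule: infinite_finite_induct) auto
lemma sum_sc: "sc (sum f A) x = (\<Sum>a\<in>A. sc (f a) x)"
  by (induction A rule: infinite_finite_induct) (auto simp: sc_add2)
lemma wd_append: "wd (v @ u) = wd v * wd u"
  by transfer (simp add: fa_word_mul)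
lemma wd_Nil: "wd [] = 1"
  by transfer simp

lemma rep_add: "rep (x + y) = fa_add (rep x) (rep y)" by transfer simp
lemma rep_sc: "rep (sc c x) = fa_smult c (rep x)" by transfer simp
lemma rep_mul: "rep (x * y) = fa_mul (rep x) (rep y)" by transfer simp
lemma rep_zero: "rep 0 = fa_zero" by transfer simp
lemma rep_sum: "rep (sum f A) w = (\<Sum>a\<in>A. rep (f a) w)"
  by (induction A rule: infinite_finite_induct) (auto simp: rep_zero fa_zero_def rep_add fa_add_def)




lemma mult_if01[simp]: "(c::complex) * (if P then 1 else 0) = (if P then c else 0)" by simp

lemma rep_wd: "rep (wd w) = fa_word w" by transfer simp

lemma ffa_eqI: "(\<And>w. rep x w = rep y w) \<Longrightarrow> x = y"
  by (metis rep_inject ext)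

lemma ffa_expand: "z = (\<Sum>w\<in>{w. rep z w \<noteq> 0}. sc (rep z w) (wd w))"
proof (rule ffa_eqI)
  fix w0
  have fin: "finite {w. rep z w \<noteq> 0}" using rep[of z] by (simp add: fa_finite_def)
  have "rep (\<Sum>w\<in>{w. rep z w \<noteq> 0}. sc (rep z w) (wd w)) w0 = (\<Sum>w\<in>{w. rep z w \<noteq> 0}. if w = w0 then rep z w else 0)"
    by (simp add: rep_sum rep_sc rep_wd fa_smult_def fa_word_def) (rule sum.cong, auto)
  also have "\<dots> = rep z w0" using fin by (simp add: sum.delta)
  finally show "rep z w0 = rep (\<Sum>w\<in>{w. rep z w \<noteq> 0}. sc (rep z w) (wd w)) w0" by simp
qed

definition "uu = wd [U]"
definition "dd = wd [D]"
definition "hh = wd [H]"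
abbreviation "aa \<equiv> uu * dd"

lemma wd_replicate: "wd (replicate k g) = wd [g] ^ k"
proof (induction k)
  case 0 thus ?case by (simp add: wd_Nil)
next
  case (Suc k)
  have "wd (replicate (Suc k) g) = wd ([g] @ replicate k g)" by simp
  also have "\<dots> = wd [g] * wd (replicate k g)" by (rule wd_append)
  finally show ?case using Suc by simp
qed

lemma wd_UD: "wd (concat (replicate k [U, D])) = aa ^ k"
proof (induction k)
  case 0 thus ?case by (simp add: wd_Nil)
next
  case (Suc k)
  have "wd (concat (replicate (Suc k) [U, D])) = wd ([U] @ [D] @ concat (replicate k [U, D]))" by simp
  also have "\<dots> = uu * (dd * aa ^ k)" by (simp only: wd_append Suc uu_def dd_def)
  finally show ?case by (simp add: mult.assoc)
qed

lemma ph_sum: "ph p = (\<Sum>j\<le>degree p. sc (coeff p j) (hh ^ j))"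
proof (rule ffa_eqI)
  fix w
  have "rep (\<Sum>j\<le>degree p. sc (coeff p j) (hh ^ j)) w = (\<Sum>j\<le>degree p. if w = replicate j H then coeff p j else 0)"
    by (simp add: rep_sum rep_sc hh_def wd_replicate[symmetric] rep_wd fa_smult_def fa_word_def)
  also have "\<dots> = rep (ph p) w"
  proof (cases "w = replicate (length w) H")
    case True
    have "(\<Sum>j\<le>degree p. if w = replicate j H then coeff p j else 0) = (\<Sum>j\<le>degree p. if j = length w then coeff p (length w) else 0)"
    proof (rule sum.cong[OF refl])
      fix j
      have "w = replicate j H \<longleftrightarrow> j = length w" using True
        by (metis length_replicate)
      thus "(if w = replicate j H then coeff p j else 0) = (if j = length w then coeff p (length w) else 0)" by simp
    qed
    also have "\<dots> = coeff p (length w)" by (simp add: coeff_eq_0 not_le)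
    finally show ?thesis using True by (simp add: ph.rep_eq fa_poly_h_def)
  next
    case False
    have "\<And>j. w \<noteq> replicate j H" using False by (metis length_replicate)
    thus ?thesis using False by (simp add: ph.rep_eq fa_poly_h_def)
  qed
  finally show "rep (ph p) w = rep (\<Sum>j\<le>degree p. sc (coeff p j) (hh ^ j)) w" by simp
qed

lemma bv_sum: "bv f = (\<Sum>k\<le>degree f. \<Sum>j\<le>degree (coeff f k). sc (coeff (coeff f k) j) (hh ^ j * aa ^ k))"
proof (rule ffa_eqI)
  fix w
  have e: "hh ^ j * aa ^ k = wd (replicate j H @ concat (replicate k [U, D]))" for j k
    by (simp add: wd_append wd_UD hh_def wd_replicate)
  show "rep (bv f) w = rep (\<Sum>k\<le>degree f. \<Sum>j\<le>degree (coeff f k). sc (coeff (coeff f k) j) (hh ^ j * aa ^ k)) w"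
    by (simp add: rep_sum rep_sc e rep_wd fa_smult_def fa_word_def bv.rep_eq fa_biv_def)
qed




lemma ph_bound: "degree p \<le> N \<Longrightarrow> ph p = (\<Sum>j\<le>N. sc (coeff p j) (hh ^ j))"
  unfolding ph_sum
  by (rule sum.mono_neutral_left) (auto simp: coeff_eq_0)

lemma ph_add: "ph (p + q) = ph p + ph q"
proof -
  let ?N = "max (degree p) (degree q)"
  have "degree (p + q) \<le> ?N" by (rule degree_add_le) auto
  hence "ph (p + q) = (\<Sum>j\<le>?N. sc (coeff (p + q) j) (hh ^ j))" by (rule ph_bound)
  also have "\<dots> = (\<Sum>j\<le>?N. sc (coeff p j) (hh ^ j)) + (\<Sum>j\<le>?N. sc (coeff q j) (hh ^ j))"
    by (simp add: sc_add2 sum.distrib)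
  also have "\<dots> = ph p + ph q" by (simp add: ph_bound[symmetric])
  finally show ?thesis .
qed

lemma ph_smult: "ph (smult c p) = sc c (ph p)"
proof -
  have "ph (smult c p) = (\<Sum>j\<le>degree p. sc (coeff (smult c p) j) (hh ^ j))"
    by (rule ph_bound) simp
  also have "\<dots> = sc c (ph p)" by (simp add: ph_sum sc_sum)
  finally show ?thesis .
qed

lemma ph_zero[simp]: "ph 0 = 0" by (simp add: ph_sum)
lemma ph_const: "ph [:c:] = sc c 1" by (simp add: ph_sum)
lemma ph_one[simp]: "ph 1 = 1" by (simp add: ph_sum one_pCons)
lemma ph_minus: "ph (- p) = - ph p" by (metis add_eq_0_iff ph_add ph_zero add.right_inverse)
lemma ph_diff: "ph (p - q) = ph p - ph q" by (metis diff_conv_add_uminus ph_add ph_minus)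

lemma ph_pCons: "ph (pCons a p) = sc a 1 + hh * ph p"
proof -
  have "ph (pCons a p) = (\<Sum>j\<le>Suc (degree p). sc (coeff (pCons a p) j) (hh ^ j))"
    by (rule ph_bound) (simp add: degree_pCons_le)
  also have "\<dots> = sc a 1 + (\<Sum>j\<le>degree p. sc (coeff p j) (hh ^ Suc j))"
    by (subst sum.atMost_Suc_shift) simp
  also have "\<dots> = sc a 1 + hh * ph p"
    by (simp add: ph_sum sum_distrib_left)
  finally show ?thesis .
qed

lemma ph_hh_comm: "ph p * hh = hh * ph p"
  by (simp add: ph_sum sum_distrib_left sum_distrib_right power_commutes mult.assoc[symmetric])

lemma ph_x: "ph [:0, 1:] = hh"
  by (simp add: ph_pCons)

lemma ph_mult: "ph (p * q) = ph p * ph q"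
proof (induction p)
  case 0 thus ?case by simp
next
  case (pCons a p)
  have "ph (pCons a p * q) = sc a (ph q) + hh * ph (p * q)"
    by (simp add: ph_add ph_smult ph_pCons)
  also have "\<dots> = (sc a 1 + hh * ph p) * ph q"
    by (simp add: pCons.IH algebra_simps)
  finally show ?case by (simp add: ph_pCons)
qed

lemma bv_sum2: "bv f = (\<Sum>k\<le>degree f. ph (coeff f k) * aa ^ k)"
  unfolding bv_sum ph_sum by (simp add: sum_distrib_right)

lemma bv_bound: "degree f \<le> N \<Longrightarrow> bv f = (\<Sum>k\<le>N. ph (coeff f k) * aa ^ k)"
  unfolding bv_sum2
  by (rule sum.mono_neutral_left) (auto simp: coeff_eq_0)

lemma bv_add: "bv (f + g) = bv f + bv g"
proof -
  let ?N = "max (degree f) (degree g)"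
  have "degree (f + g) \<le> ?N" by (rule degree_add_le) auto
  hence "bv (f + g) = (\<Sum>k\<le>?N. ph (coeff (f + g) k) * aa ^ k)" by (rule bv_bound)
  also have "\<dots> = (\<Sum>k\<le>?N. ph (coeff f k) * aa ^ k) + (\<Sum>k\<le>?N. ph (coeff g k) * aa ^ k)"
    by (simp add: ph_add sum.distrib distrib_right)
  also have "\<dots> = bv f + bv g" by (simp add: bv_bound[symmetric])
  finally show ?thesis .
qed

lemma bv_zero[simp]: "bv 0 = 0" by (simp add: bv_sum2)
lemma bv_minus: "bv (- f) = - bv f" by (metis add_eq_0_iff bv_add bv_zero add.right_inverse)
lemma bv_diff: "bv (f - g) = bv f - bv g" by (metis diff_conv_add_uminus bv_add bv_minus)

lemma bv_smult: "bv (smult c f) = ph c * bv f"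
proof -
  have "bv (smult c f) = (\<Sum>k\<le>degree f. ph (coeff (smult c f) k) * aa ^ k)"
    by (rule bv_bound) simp
  also have "\<dots> = ph c * bv f" by (simp add: bv_sum2 sum_distrib_left ph_mult mult.assoc)
  finally show ?thesis .
qed

lemma bv_const: "bv [:c:] = ph c" by (simp add: bv_sum2)

lemma bv_pCons: "bv (pCons c f) = ph c + bv f * aa"
proof -
  have "bv (pCons c f) = (\<Sum>k\<le>Suc (degree f). ph (coeff (pCons c f) k) * aa ^ k)"
    by (rule bv_bound) (simp add: degree_pCons_le)
  also have "\<dots> = ph c + (\<Sum>k\<le>degree f. ph (coeff f k) * aa ^ Suc k)"
    by (subst sum.atMost_Suc_shift) simp
  also have "(\<Sum>k\<le>degree f. ph (coeff f k) * aa ^ Suc k) = (\<Sum>k\<le>degree f. ph (coeff f k) * aa ^ k) * aa"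
    by (simp only: power_Suc2 sum_distrib_right mult.assoc)
  finally show ?thesis by (simp add: bv_sum2)
qed

lemma bv_one[simp]: "bv 1 = 1" by (simp add: one_pCons bv_const ph_const)
lemma bv_y: "bv [:0, 1:] = aa" by (simp add: bv_pCons one_pCons[symmetric] bv_const)




lemma fa_ideal_finite:
  assumes "\<And>g. g \<in> G \<Longrightarrow> fa_finite g"
  shows "x \<in> fa_ideal G \<Longrightarrow> fa_finite x"
  by (induction rule: fa_ideal.induct) (auto intro: fa_finite_zero fa_finite_add fa_finite_mul assms)

lemma fa_ideal_mul_left:
  "x \<in> fa_ideal G \<Longrightarrow> fa_finite z \<Longrightarrow> fa_mul z x \<in> fa_ideal G"
proof (induction rule: fa_ideal.induct)
  case zero thus ?case by (simp add: fa_mul_zero_right fa_ideal.zero)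
next
  case (gen g a b)
  have "fa_mul z (fa_mul (fa_mul a g) b) = fa_mul (fa_mul (fa_mul z a) g) b"
    by (simp add: fa_mul_assoc)
  thus ?case using gen by (simp add: fa_ideal.gen fa_finite_mul)
next
  case (add x y) thus ?case by (simp add: fa_mul_add_right fa_ideal.add)
qed

lemma fa_ideal_mul_right:
  "x \<in> fa_ideal G \<Longrightarrow> fa_finite z \<Longrightarrow> fa_mul x z \<in> fa_ideal G"
proof (induction rule: fa_ideal.induct)
  case zero thus ?case by (simp add: fa_mul_zero_left fa_ideal.zero)
next
  case (gen g a b)
  have "fa_mul (fa_mul (fa_mul a g) b) z = fa_mul (fa_mul a g) (fa_mul b z)"
    by (simp add: fa_mul_assoc)
  thus ?case using gen by (simp add: fa_ideal.gen fa_finite_mul)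
next
  case (add x y) thus ?case by (simp add: fa_mul_add_left fa_ideal.add)
qed

lemma fa_ideal_smult:
  "x \<in> fa_ideal G \<Longrightarrow> fa_smult c x \<in> fa_ideal G"
proof (induction rule: fa_ideal.induct)
  case zero thus ?case by (simp add: fa_smult_def fa_zero_def fa_ideal.zero[unfolded fa_zero_def])
next
  case (gen g a b)
  have "fa_smult c (fa_mul (fa_mul a g) b) = fa_mul (fa_mul (fa_smult c a) g) b"
    by (simp add: fa_mul_smult_left)
  thus ?case using gen by (simp add: fa_ideal.gen fa_finite_smult)
next
  case (add x y)
  have "fa_smult c (fa_add x y) = fa_add (fa_smult c x) (fa_smult c y)"
    by (auto simp: fa_smult_def fa_add_def distrib_left)
  thus ?case using add by (simp add: fa_ideal.add)
qed

lemma fa_ideal_gen1: "g \<in> G \<Longrightarrow> g \<in> fa_ideal G"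
  using fa_ideal.gen[of g G "fa_word []" "fa_word []"]
  by (simp add: fa_finite_word fa_mul_one_left fa_mul_one_right)

locale dua =
  fixes r s \<gamma> :: complex and \<phi> :: "complex poly" and lam :: complex and n :: nat
  assumes distinct_wt: "\<forall>i\<le>n. \<forall>j\<le>n. i \<noteq> j \<longrightarrow> wt r s \<gamma> \<phi> lam i \<noteq> wt r s \<gamma> \<phi> lam j"
    and beta_nz: "\<forall>i. 1 \<le> i \<and> i \<le> n \<longrightarrow> snd (wt r s \<gamma> \<phi> lam i) \<noteq> 0"
    and beta_end: "snd (wt r s \<gamma> \<phi> lam (Suc n)) = 0"
begin

abbreviation "lm i \<equiv> fst (wt r s \<gamma> \<phi> lam i)"
abbreviation "bt i \<equiv> snd (wt r s \<gamma> \<phi> lam i)"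

definition "Gset = dua_rels r s \<gamma> \<phi> \<union>
              {fa_word (replicate (Suc n) U), fa_word (replicate (Suc n) D)} \<union>
              {fa_biv f | f. \<forall>i\<le>n. poly2 f (lm i) (bt i) = 0}"

definition "Iset = {z. rep z \<in> fa_ideal Gset}"

definition cg (infix "\<approx>" 50) where "x \<approx> y \<longleftrightarrow> x - y \<in> Iset"

lemma Gset_finite: "g \<in> Gset \<Longrightarrow> fa_finite g"
  unfolding Gset_def dua_rels_def
  by (auto intro!: fa_finite_add fa_finite_smult fa_finite_word fa_finite_poly_h fa_finite_biv)

lemma Iset_zero[simp]: "0 \<in> Iset" by (simp add: Iset_def rep_zero fa_ideal.zero)
lemma Iset_add: "x \<in> Iset \<Longrightarrow> y \<in> Iset \<Longrightarrow> x + y \<in> Iset"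
  by (simp add: Iset_def rep_add fa_ideal.add)
lemma Iset_sc: "x \<in> Iset \<Longrightarrow> sc c x \<in> Iset"
  by (simp add: Iset_def rep_sc fa_ideal_smult)
lemma Iset_minus: "x \<in> Iset \<Longrightarrow> - x \<in> Iset"
  using Iset_sc[of x "-1"] by (simp add: sc_neg)
lemma Iset_diff: "x \<in> Iset \<Longrightarrow> y \<in> Iset \<Longrightarrow> x - y \<in> Iset"
  by (metis Iset_add Iset_minus diff_conv_add_uminus)
lemma Iset_mult_left: "x \<in> Iset \<Longrightarrow> z * x \<in> Iset"
  using rep[of z] by (simp add: Iset_def rep_mul fa_ideal_mul_left)
lemma Iset_mult_right: "x \<in> Iset \<Longrightarrow> x * z \<in> Iset"
  using rep[of z] by (simp add: Iset_def rep_mul fa_ideal_mul_right)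
lemma Iset_sum: "(\<And>a. a \<in> A \<Longrightarrow> f a \<in> Iset) \<Longrightarrow> sum f A \<in> Iset"
  by (induction A rule: infinite_finite_induct) (auto intro: Iset_add)
lemma Iset_gen: "g \<in> Gset \<Longrightarrow> rep z = g \<Longrightarrow> z \<in> Iset"
  by (simp add: Iset_def fa_ideal_gen1)

lemma cg_refl[simp]: "x \<approx> x" by (simp add: cg_def)
lemma cg_sym: "x \<approx> y \<Longrightarrow> y \<approx> x"
  unfolding cg_def by (metis Iset_minus minus_diff_eq)
lemma cg_trans[trans]: "x \<approx> y \<Longrightarrow> y \<approx> z \<Longrightarrow> x \<approx> z"
  unfolding cg_def by (metis Iset_add diff_add_cancel add_diff_eq)
lemma cg_add: "x \<approx> y \<Longrightarrow> x' \<approx> y' \<Longrightarrow> x + x' \<approx> y + y'"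
  unfolding cg_def using Iset_add by (metis add_diff_add)
lemma cg_diff: "x \<approx> y \<Longrightarrow> x' \<approx> y' \<Longrightarrow> x - x' \<approx> y - y'"
  unfolding cg_def using Iset_diff by (metis diff_diff_eq diff_diff_eq2 diff_add_eq add_diff_eq)
lemma cg_sc: "x \<approx> y \<Longrightarrow> sc c x \<approx> sc c y"
  unfolding cg_def by (metis Iset_sc sc_diff)
lemma cg_ml: "x \<approx> y \<Longrightarrow> z * x \<approx> z * y"
  unfolding cg_def by (metis Iset_mult_left right_diff_distrib)
lemma cg_mr: "x \<approx> y \<Longrightarrow> x * z \<approx> y * z"
  unfolding cg_def by (metis Iset_mult_right left_diff_distrib)
lemma cg_mult: "x \<approx> y \<Longrightarrow> x' \<approx> y' \<Longrightarrow> x * x' \<approx> y * y'"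
  by (meson cg_ml cg_mr cg_trans)
lemma cg_sum: "(\<And>a. a \<in> A \<Longrightarrow> f a \<approx> g a) \<Longrightarrow> sum f A \<approx> sum g A"
  unfolding cg_def by (metis (mono_tags) Iset_sum sum_subtractf)
lemma cg_I: "x \<in> Iset \<Longrightarrow> x \<approx> 0" by (simp add: cg_def)
lemma cg_I': "x - y \<in> Iset \<Longrightarrow> x \<approx> y" by (simp add: cg_def)
lemma cg_eq: "x = y \<Longrightarrow> x \<approx> y" by simp

end



context dua begin

lemma rel1: "hh * uu - sc r (uu * hh) - sc \<gamma> uu \<in> Iset"
proof (rule Iset_gen)
  show "fa_add (fa_word [H,U]) (fa_add (fa_smult (-r) (fa_word [U,H])) (fa_smult (-\<gamma>) (fa_word [U]))) \<in> Gset"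
    by (simp add: Gset_def dua_rels_def)
  have "hh * uu - sc r (uu * hh) - sc \<gamma> uu = hh * uu + (sc (-r) (uu * hh) + sc (-\<gamma>) uu)"
    by (simp add: sc_neg)
  thus "rep (hh * uu - sc r (uu * hh) - sc \<gamma> uu) = fa_add (fa_word [H,U]) (fa_add (fa_smult (-r) (fa_word [U,H])) (fa_smult (-\<gamma>) (fa_word [U])))"
    by (simp only: rep_add rep_sc rep_mul hh_def uu_def rep_wd fa_word_mul) simp
qed

lemma rel2: "dd * hh - sc r (hh * dd) - sc \<gamma> dd \<in> Iset"
proof (rule Iset_gen)
  show "fa_add (fa_word [D,H]) (fa_add (fa_smult (-r) (fa_word [H,D])) (fa_smult (-\<gamma>) (fa_word [D]))) \<in> Gset"
    by (simp add: Gset_def dua_rels_def)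
  have "dd * hh - sc r (hh * dd) - sc \<gamma> dd = dd * hh + (sc (-r) (hh * dd) + sc (-\<gamma>) dd)"
    by (simp add: sc_neg)
  thus "rep (dd * hh - sc r (hh * dd) - sc \<gamma> dd) = fa_add (fa_word [D,H]) (fa_add (fa_smult (-r) (fa_word [H,D])) (fa_smult (-\<gamma>) (fa_word [D])))"
    by (simp only: rep_add rep_sc rep_mul hh_def dd_def rep_wd fa_word_mul) simp
qed

lemma rel3: "dd * uu - sc s (uu * dd) - ph \<phi> \<in> Iset"
proof (rule Iset_gen)
  show "fa_add (fa_word [D,U]) (fa_add (fa_smult (-s) (fa_word [U,D])) (fa_smult (-1) (fa_poly_h \<phi>))) \<in> Gset"
    by (simp add: Gset_def dua_rels_def)
  have "dd * uu - sc s (uu * dd) - ph \<phi> = dd * uu + (sc (-s) (uu * dd) + sc (-1) (ph \<phi>))"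
    by (simp add: sc_neg)
  thus "rep (dd * uu - sc s (uu * dd) - ph \<phi>) = fa_add (fa_word [D,U]) (fa_add (fa_smult (-s) (fa_word [U,D])) (fa_smult (-1) (fa_poly_h \<phi>)))"
    by (simp only: rep_add rep_sc rep_mul uu_def dd_def rep_wd fa_word_mul ph.rep_eq) simp
qed

lemma uu_pow: "uu ^ Suc n \<in> Iset"
proof (rule Iset_gen[of "fa_word (replicate (Suc n) U)"])
  show "fa_word (replicate (Suc n) U) \<in> Gset" by (simp add: Gset_def)
  have "uu ^ Suc n = wd (replicate (Suc n) U)" by (simp only: uu_def wd_replicate)
  thus "rep (uu ^ Suc n) = fa_word (replicate (Suc n) U)" by (simp only: rep_wd)
qed

lemma dd_pow: "dd ^ Suc n \<in> Iset"
proof (rule Iset_gen[of "fa_word (replicate (Suc n) D)"])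
  show "fa_word (replicate (Suc n) D) \<in> Gset" by (simp add: Gset_def)
  have "dd ^ Suc n = wd (replicate (Suc n) D)" by (simp only: dd_def wd_replicate)
  thus "rep (dd ^ Suc n) = fa_word (replicate (Suc n) D)" by (simp only: rep_wd)
qed

lemma bv_J: "\<forall>i\<le>n. poly2 f (lm i) (bt i) = 0 \<Longrightarrow> bv f \<in> Iset"
  by (rule Iset_gen[of "fa_biv f"]) (auto simp: Gset_def bv.rep_eq)

lemma R1: "hh * uu \<approx> sc r (uu * hh) + sc \<gamma> uu"
  using rel1 by (simp add: cg_def diff_diff_eq)
lemma R2: "dd * hh \<approx> sc r (hh * dd) + sc \<gamma> dd"
  using rel2 by (simp add: cg_def diff_diff_eq)
lemma R3: "dd * uu \<approx> sc s aa + ph \<phi>"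
  using rel3 by (simp add: cg_def diff_diff_eq)

lemma aa_hh: "aa * hh \<approx> hh * aa"
proof (rule cg_I')
  have "aa * hh - hh * aa = uu * (dd * hh - sc r (hh * dd) - sc \<gamma> dd) - (hh * uu - sc r (uu * hh) - sc \<gamma> uu) * dd"
    by (simp add: algebra_simps)
  thus "aa * hh - hh * aa \<in> Iset"
    using rel1 rel2 by (simp add: Iset_diff Iset_mult_left Iset_mult_right)
qed

lemma aa_ph: "aa * ph p \<approx> ph p * aa"
proof (induction p)
  case 0 thus ?case by simp
next
  case (pCons a p)
  have "aa * ph (pCons a p) = sc a aa + (aa * hh) * ph p" by (simp add: ph_pCons algebra_simps)
  also have "\<dots> \<approx> sc a aa + (hh * aa) * ph p" by (intro cg_add cg_refl cg_mr aa_hh)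
  also have "\<dots> = sc a aa + hh * (aa * ph p)" by (simp add: mult.assoc)
  also have "\<dots> \<approx> sc a aa + hh * (ph p * aa)" by (intro cg_add cg_refl cg_ml pCons.IH)
  also have "\<dots> = ph (pCons a p) * aa" by (simp add: ph_pCons algebra_simps)
  finally show ?case .
qed

lemma aa_bv: "aa * bv f \<approx> bv f * aa"
proof -
  have "aa * bv f = (\<Sum>k\<le>degree f. (aa * ph (coeff f k)) * aa ^ k)"
    by (simp add: bv_sum2 sum_distrib_left mult.assoc)
  also have "\<dots> \<approx> (\<Sum>k\<le>degree f. (ph (coeff f k) * aa) * aa ^ k)"
    by (intro cg_sum cg_mr aa_ph)
  also have "\<dots> = bv f * aa"
    by (simp add: bv_sum2 sum_distrib_right mult.assoc power_commutes)
  finally show ?thesis .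
qed

lemma bv_mult: "bv (f * g) \<approx> bv f * bv g"
proof (induction f)
  case 0 thus ?case by simp
next
  case (pCons c f)
  have "bv (pCons c f * g) = ph c * bv g + bv (f * g) * aa"
    by (simp add: bv_add bv_smult bv_pCons)
  also have "\<dots> \<approx> ph c * bv g + (bv f * bv g) * aa"
    by (intro cg_add cg_refl cg_mr pCons.IH)
  also have "\<dots> = ph c * bv g + bv f * (bv g * aa)" by (simp add: mult.assoc)
  also have "\<dots> \<approx> ph c * bv g + bv f * (aa * bv g)"
    by (intro cg_add cg_refl cg_ml cg_sym[OF aa_bv])
  also have "\<dots> = bv (pCons c f) * bv g" by (simp add: bv_pCons algebra_simps)
  finally show ?case .
qed

end



lemma poly2_add[simp]: "poly2 (f + g) a b = poly2 f a b + poly2 g a b" by (simp add: poly2_def)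
lemma poly2_diff[simp]: "poly2 (f - g) a b = poly2 f a b - poly2 g a b" by (simp add: poly2_def)
lemma poly2_mult[simp]: "poly2 (f * g) a b = poly2 f a b * poly2 g a b" by (simp add: poly2_def)
lemma poly2_const[simp]: "poly2 [:p:] a b = poly p a" by (simp add: poly2_def)
lemma poly2_pCons: "poly2 (pCons c f) a b = poly c a + b * poly2 f a b" by (simp add: poly2_def)
lemma poly2_smult[simp]: "poly2 (smult c f) a b = poly c a * poly2 f a b" by (simp add: poly2_def)
lemma poly2_zero[simp]: "poly2 0 a b = 0" by (simp add: poly2_def)
lemma poly2_y: "poly2 [:0, 1:] a b = b" by (simp add: poly2_def)
lemma poly2_prod: "poly2 (prod f A) a b = (\<Prod>i\<in>A. poly2 (f i) a b)"
  by (induction A rule: infinite_finite_induct) (auto simp: poly2_def)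
lemma poly2_sum: "poly2 (sum f A) a b = (\<Sum>i\<in>A. poly2 (f i) a b)"
  by (induction A rule: infinite_finite_induct) (auto simp: poly2_def)

lemma ph_lin: "ph [:c0, c1:] = sc c0 1 + sc c1 hh"
  by (simp add: ph_pCons ph_const)

context dua begin

lemma dd_ph: "dd * ph p \<approx> ph (pcompose p [:\<gamma>, r:]) * dd"
proof (induction p)
  case 0 thus ?case by simp
next
  case (pCons a p)
  let ?q = "pcompose p [:\<gamma>, r:]"
  have "dd * ph (pCons a p) = sc a dd + (dd * hh) * ph p" by (simp add: ph_pCons algebra_simps)
  also have "\<dots> \<approx> sc a dd + (sc r (hh * dd) + sc \<gamma> dd) * ph p" by (intro cg_add cg_refl cg_mr R2)
  also have "\<dots> = sc a dd + sc r (hh * (dd * ph p)) + sc \<gamma> (dd * ph p)" by (simp add: algebra_simps)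
  also have "\<dots> \<approx> sc a dd + sc r (hh * (ph ?q * dd)) + sc \<gamma> (ph ?q * dd)"
    by (intro cg_add cg_refl cg_sc cg_ml pCons.IH)
  also have "\<dots> = ph (pcompose (pCons a p) [:\<gamma>, r:]) * dd"
    by (simp add: pcompose_pCons ph_add ph_mult ph_const ph_lin ph_smult ph_pCons algebra_simps)
  finally show ?case .
qed

lemma ph_uu: "ph p * uu \<approx> uu * ph (pcompose p [:\<gamma>, r:])"
proof (induction p)
  case 0 thus ?case by simp
next
  case (pCons a p)
  let ?q = "pcompose p [:\<gamma>, r:]"
  have "ph (pCons a p) * uu = sc a uu + hh * (ph p * uu)" by (simp add: ph_pCons algebra_simps)
  also have "\<dots> \<approx> sc a uu + hh * (uu * ph ?q)" by (intro cg_add cg_refl cg_ml pCons.IH)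
  also have "\<dots> = sc a uu + (hh * uu) * ph ?q" by (simp add: mult.assoc)
  also have "\<dots> \<approx> sc a uu + (sc r (uu * hh) + sc \<gamma> uu) * ph ?q" by (intro cg_add cg_refl cg_mr R1)
  also have "\<dots> = uu * ph (pcompose (pCons a p) [:\<gamma>, r:])"
    by (simp add: pcompose_pCons ph_add ph_mult ph_const ph_lin ph_smult ph_pCons algebra_simps)
  finally show ?case .
qed

definition TP :: "complex poly poly \<Rightarrow> bool" where
  "TP f \<longleftrightarrow> (\<exists>g. (\<forall>a b. poly2 g a b = poly2 f (r * a + \<gamma>) (s * b + poly \<phi> a)) \<and>
       dd * bv f \<approx> bv g * dd \<and> bv f * uu \<approx> uu * bv g)"

lemma TP_add: "TP f \<Longrightarrow> TP g \<Longrightarrow> TP (f + g)"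
  unfolding TP_def
proof (elim exE conjE)
  fix f' g'
  assume f: "\<forall>a b. poly2 f' a b = poly2 f (r * a + \<gamma>) (s * b + poly \<phi> a)" "dd * bv f \<approx> bv f' * dd" "bv f * uu \<approx> uu * bv f'"
  assume g: "\<forall>a b. poly2 g' a b = poly2 g (r * a + \<gamma>) (s * b + poly \<phi> a)" "dd * bv g \<approx> bv g' * dd" "bv g * uu \<approx> uu * bv g'"
  show "\<exists>h. (\<forall>a b. poly2 h a b = poly2 (f + g) (r * a + \<gamma>) (s * b + poly \<phi> a)) \<and>
       dd * bv (f + g) \<approx> bv h * dd \<and> bv (f + g) * uu \<approx> uu * bv h"
  proof (intro exI conjI allI)
    show "poly2 (f' + g') a b = poly2 (f + g) (r * a + \<gamma>) (s * b + poly \<phi> a)" for a b using f g by simp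
    show "dd * bv (f + g) \<approx> bv (f' + g') * dd"
      using cg_add[OF f(2) g(2)] by (simp add: bv_add algebra_simps)
    show "bv (f + g) * uu \<approx> uu * bv (f' + g')"
      using cg_add[OF f(3) g(3)] by (simp add: bv_add algebra_simps)
  qed
qed

lemma TP_mult: "TP f \<Longrightarrow> TP g \<Longrightarrow> TP (f * g)"
  unfolding TP_def
proof (elim exE conjE)
  fix f' g'
  assume f: "\<forall>a b. poly2 f' a b = poly2 f (r * a + \<gamma>) (s * b + poly \<phi> a)" "dd * bv f \<approx> bv f' * dd" "bv f * uu \<approx> uu * bv f'"
  assume g: "\<forall>a b. poly2 g' a b = poly2 g (r * a + \<gamma>) (s * b + poly \<phi> a)" "dd * bv g \<approx> bv g' * dd" "bv g * uu \<approx> uu * bv g'"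
  show "\<exists>h. (\<forall>a b. poly2 h a b = poly2 (f * g) (r * a + \<gamma>) (s * b + poly \<phi> a)) \<and>
       dd * bv (f * g) \<approx> bv h * dd \<and> bv (f * g) * uu \<approx> uu * bv h"
  proof (intro exI conjI allI)
    show "poly2 (f' * g') a b = poly2 (f * g) (r * a + \<gamma>) (s * b + poly \<phi> a)" for a b using f g by simp
    have "dd * bv (f * g) \<approx> dd * (bv f * bv g)" by (intro cg_ml bv_mult)
    also have "\<dots> = (dd * bv f) * bv g" by (simp add: mult.assoc)
    also have "\<dots> \<approx> (bv f' * dd) * bv g" by (intro cg_mr f(2))
    also have "\<dots> = bv f' * (dd * bv g)" by (simp add: mult.assoc)
    also have "\<dots> \<approx> bv f' * (bv g' * dd)" by (intro cg_ml g(2))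
    also have "\<dots> = (bv f' * bv g') * dd" by (simp add: mult.assoc)
    also have "\<dots> \<approx> bv (f' * g') * dd" by (intro cg_mr cg_sym[OF bv_mult])
    finally show "dd * bv (f * g) \<approx> bv (f' * g') * dd" .
    have "bv (f * g) * uu \<approx> (bv f * bv g) * uu" by (intro cg_mr bv_mult)
    also have "\<dots> = bv f * (bv g * uu)" by (simp add: mult.assoc)
    also have "\<dots> \<approx> bv f * (uu * bv g')" by (intro cg_ml g(3))
    also have "\<dots> = (bv f * uu) * bv g'" by (simp add: mult.assoc)
    also have "\<dots> \<approx> (uu * bv f') * bv g'" by (intro cg_mr f(3))
    also have "\<dots> = uu * (bv f' * bv g')" by (simp add: mult.assoc)
    also have "\<dots> \<approx> uu * bv (f' * g')" by (intro cg_ml cg_sym[OF bv_mult])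
    finally show "bv (f * g) * uu \<approx> uu * bv (f' * g')" .
  qed
qed

lemma TP_const: "TP [:p:]"
  unfolding TP_def
proof (intro exI conjI allI)
  show "poly2 [:pcompose p [:\<gamma>, r:]:] a b = poly2 [:p:] (r * a + \<gamma>) (s * b + poly \<phi> a)" for a b
    by (simp add: poly_pcompose algebra_simps)
  show "dd * bv [:p:] \<approx> bv [:pcompose p [:\<gamma>, r:]:] * dd" by (simp add: bv_const dd_ph)
  show "bv [:p:] * uu \<approx> uu * bv [:pcompose p [:\<gamma>, r:]:]" by (simp add: bv_const ph_uu)
qed

lemma TP_y: "TP [:0, 1:]"
  unfolding TP_def
proof (intro exI conjI allI)
  let ?g = "pCons \<phi> [:[:s:]:]"
  have bg: "bv ?g = ph \<phi> + sc s aa" by (simp add: bv_pCons bv_const ph_const)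
  show "poly2 ?g a b = poly2 [:0, 1:] (r * a + \<gamma>) (s * b + poly \<phi> a)" for a b
    by (simp add: poly2_pCons poly2_y algebra_simps)
  have "dd * bv [:0, 1:] = (dd * uu) * dd" by (simp add: bv_y mult.assoc)
  also have "\<dots> \<approx> (sc s aa + ph \<phi>) * dd" by (intro cg_mr R3)
  also have "\<dots> = bv ?g * dd" by (simp add: bg algebra_simps)
  finally show "dd * bv [:0, 1:] \<approx> bv ?g * dd" .
  have "bv [:0, 1:] * uu = uu * (dd * uu)" by (simp add: bv_y mult.assoc)
  also have "\<dots> \<approx> uu * (sc s aa + ph \<phi>)" by (intro cg_ml R3)
  also have "\<dots> = uu * bv ?g" by (simp add: bg algebra_simps)
  finally show "bv [:0, 1:] * uu \<approx> uu * bv ?g" .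
qed

lemma TP_all: "TP f"
proof (induction f)
  case 0 thus ?case using TP_const[of 0] by simp
next
  case (pCons c f)
  have "pCons c f = [:c:] + [:0, 1:] * f" by simp
  thus ?case using TP_add[OF TP_const TP_mult[OF TP_y pCons.IH]] by simp
qed

lemma transport: "\<exists>g. (\<forall>a b. poly2 g a b = poly2 f (r * a + \<gamma>) (s * b + poly \<phi> a)) \<and>
       dd * bv f \<approx> bv g * dd \<and> bv f * uu \<approx> uu * bv g"
  using TP_all[of f] by (simp add: TP_def)

end



lemma wt0: "wt r s \<gamma> \<phi> lam 0 = (lam, 0)" by (simp add: wt_def)
lemma wt_Suc: "wt r s \<gamma> \<phi> lam (Suc i) = (r * fst (wt r s \<gamma> \<phi> lam i) + \<gamma>,
    s * snd (wt r s \<gamma> \<phi> lam i) + poly \<phi> (fst (wt r s \<gamma> \<phi> lam i)))"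
  by (simp add: wt_def Phi_def case_prod_beta)

context dua begin

lemma bt0: "bt 0 = 0" by (simp add: wt0)

definition ell :: "nat \<Rightarrow> nat \<Rightarrow> complex poly poly" where
  "ell i j = (if lm i \<noteq> lm j then [:[:- lm j / (lm i - lm j), 1 / (lm i - lm j):]:]
              else [:[:- bt j / (bt i - bt j):], [:1 / (bt i - bt j):]:])"

lemma ell_eval: "poly2 (ell i j) a b = (if lm i \<noteq> lm j then (a - lm j) / (lm i - lm j) else (b - bt j) / (bt i - bt j))"
  by (simp add: ell_def poly2_pCons diff_divide_distrib algebra_simps)

lemma ell_ii: "i \<le> n \<Longrightarrow> j \<le> n \<Longrightarrow> i \<noteq> j \<Longrightarrow> poly2 (ell i j) (lm i) (bt i) = 1"
proof -
  assume h: "i \<le> n" "j \<le> n" "i \<noteq> j"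
  hence ne: "wt r s \<gamma> \<phi> lam i \<noteq> wt r s \<gamma> \<phi> lam j" using distinct_wt by blast
  show ?thesis
  proof (cases "lm i = lm j")
    case True
    hence "bt i \<noteq> bt j" using ne by (simp add: prod_eq_iff)
    thus ?thesis using True by (simp add: ell_eval)
  next
    case False thus ?thesis by (simp add: ell_eval)
  qed
qed

lemma ell_jj: "poly2 (ell i j) (lm j) (bt j) = 0"
  by (simp add: ell_eval)

definition lag :: "nat \<Rightarrow> complex poly poly" where
  "lag i = (\<Prod>j\<in>{..n} - {i}. ell i j)"

lemma lag_eval: "i \<le> n \<Longrightarrow> k \<le> n \<Longrightarrow> poly2 (lag i) (lm k) (bt k) = (if k = i then 1 else 0)"
proof -
  assume h: "i \<le> n" "k \<le> n"
  show ?thesis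
  proof (cases "k = i")
    case True
    thus ?thesis using h by (simp add: lag_def poly2_prod ell_ii)
  next
    case False
    have "k \<in> {..n} - {i}" using h False by auto
    hence "(\<Prod>j\<in>{..n} - {i}. poly2 (ell i j) (lm k) (bt k)) = 0"
      by (intro prod_zero) (auto intro!: bexI[of _ k] simp: ell_jj)
    thus ?thesis using False by (simp add: lag_def poly2_prod)
  qed
qed

lemma interp: "\<exists>f. \<forall>i\<le>n. poly2 f (lm i) (bt i) = t i"
proof (intro exI allI impI)
  fix k assume k: "k \<le> n"
  have "poly2 (\<Sum>i\<le>n. smult [:t i:] (lag i)) (lm k) (bt k) = (\<Sum>i\<le>n. t i * (if k = i then 1 else 0))"
    by (simp add: poly2_sum lag_eval k)
  also have "\<dots> = t k" using k by (simp add: sum.delta)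
  finally show "poly2 (\<Sum>i\<le>n. smult [:t i:] (lag i)) (lm k) (bt k) = t k" .
qed

definition "p0 = (SOME p. \<forall>i\<le>n. poly2 p (lm i) (bt i) = (if i = 0 then 1 else 0))"

lemma p0_eval: "i \<le> n \<Longrightarrow> poly2 p0 (lm i) (bt i) = (if i = 0 then 1 else 0)"
proof -
  have "\<forall>i\<le>n. poly2 p0 (lm i) (bt i) = (if i = 0 then 1 else 0)"
    unfolding p0_def by (rule someI_ex[OF interp])
  thus "i \<le> n \<Longrightarrow> ?thesis" by simp
qed

definition "EE = bv p0"

end


context dua begin
lemma decomp: "\<exists>c g. bv f \<approx> sc c EE + uu * bv g * dd"
proof -
  define c where "c = poly2 f (lm 0) (bt 0)"
  obtain g0 where g0: "\<forall>i\<le>n. poly2 g0 (lm i) (bt i) = (poly2 f (lm i) (bt i) - c * poly2 p0 (lm i) (bt i)) / bt i"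
    using interp[of "\<lambda>i. (poly2 f (lm i) (bt i) - c * poly2 p0 (lm i) (bt i)) / bt i"] by blast
  define j where "j = f - smult [:c:] p0 - pCons 0 g0"
  have jv: "\<forall>i\<le>n. poly2 j (lm i) (bt i) = 0"
  proof (intro allI impI)
    fix i assume i: "i \<le> n"
    show "poly2 j (lm i) (bt i) = 0"
    proof (cases "i = 0")
      case True
      have "poly2 p0 (lm 0) (bt 0) = 1" using p0_eval[of 0] by simp
      thus ?thesis using True by (simp add: j_def poly2_pCons c_def bt0)
    next
      case False
      hence bz: "bt i \<noteq> 0" using beta_nz i by simp
      have "poly2 g0 (lm i) (bt i) = (poly2 f (lm i) (bt i) - c * poly2 p0 (lm i) (bt i)) / bt i"
        using g0 i by blast
      hence "bt i * poly2 g0 (lm i) (bt i) = poly2 f (lm i) (bt i) - c * poly2 p0 (lm i) (bt i)"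
        using bz by simp
      thus ?thesis by (simp add: j_def poly2_pCons)
    qed
  qed
  obtain g' where g': "dd * bv g0 \<approx> bv g' * dd" using transport[of g0] by blast
  have "f = j + smult [:c:] p0 + pCons 0 g0" by (simp add: j_def)
  hence "bv f = bv j + sc c EE + bv g0 * aa"
    by (simp add: bv_add bv_smult ph_const EE_def bv_pCons)
  also have "\<dots> \<approx> 0 + sc c EE + aa * bv g0"
    by (intro cg_add cg_refl cg_I bv_J jv cg_sym[OF aa_bv])
  also have "\<dots> = sc c EE + uu * (dd * bv g0)" by (simp add: mult.assoc)
  also have "\<dots> \<approx> sc c EE + uu * (bv g' * dd)" by (intro cg_add cg_refl cg_ml g')
  also have "\<dots> = sc c EE + uu * bv g' * dd" by (simp only: mult.assoc)
  finally show ?thesis by blast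
qed

end



context dua begin

inductive_set Sp :: "ffa set" where
  gen: "uu ^ a * bv f * dd ^ b \<in> Sp"
| add: "x \<in> Sp \<Longrightarrow> y \<in> Sp \<Longrightarrow> x + y \<in> Sp"
| cgr: "x \<in> Sp \<Longrightarrow> x \<approx> y \<Longrightarrow> y \<in> Sp"

lemma Sp_zero: "0 \<in> Sp"
  using Sp.gen[of 0 0 0] by simp

lemma Sp_sc: "x \<in> Sp \<Longrightarrow> sc c x \<in> Sp"
proof (induction rule: Sp.induct)
  case (gen a f b)
  have "sc c (uu ^ a * bv f * dd ^ b) = uu ^ a * bv (smult [:c:] f) * dd ^ b"
    by (simp add: bv_smult ph_const)
  thus ?case using Sp.gen by simp
next
  case (add x y) thus ?case by (simp add: Sp.add)
next
  case (cgr x y) thus ?case by (meson Sp.cgr cg_sc)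
qed

lemma Sp_sum: "(\<And>a. a \<in> A \<Longrightarrow> f a \<in> Sp) \<Longrightarrow> sum f A \<in> Sp"
  by (induction A rule: infinite_finite_induct) (auto intro: Sp.add Sp_zero)

lemma Sp_mult_left:
  assumes "\<And>a f b. m * (uu ^ a * bv f * dd ^ b) \<in> Sp"
  shows "z \<in> Sp \<Longrightarrow> m * z \<in> Sp"
proof (induction rule: Sp.induct)
  case (gen a f b) thus ?case by (rule assms)
next
  case (add x y) thus ?case by (simp add: distrib_left Sp.add)
next
  case (cgr x y) thus ?case by (meson Sp.cgr cg_ml)
qed

lemma Sp_uu: "z \<in> Sp \<Longrightarrow> uu * z \<in> Sp"
proof (rule Sp_mult_left)
  fix a f b
  have e: "uu * (uu ^ a * bv f * dd ^ b) = uu ^ Suc a * bv f * dd ^ b" by (simp only: power_Suc mult.assoc)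
  show "uu * (uu ^ a * bv f * dd ^ b) \<in> Sp" unfolding e by (rule Sp.gen)
qed

lemma bv_uu_pow: "\<exists>t'. bv t * uu ^ a \<approx> uu ^ a * bv t'"
proof (induction a arbitrary: t)
  case 0 thus ?case by (intro exI[of _ t]) simp
next
  case (Suc a)
  obtain t1 where t1: "bv t * uu ^ a \<approx> uu ^ a * bv t1" using Suc by blast
  obtain t2 where t2: "bv t1 * uu \<approx> uu * bv t2" using transport[of t1] by blast
  have "bv t * uu ^ Suc a = (bv t * uu ^ a) * uu" by (simp only: power_Suc2 mult.assoc)
  also have "\<dots> \<approx> (uu ^ a * bv t1) * uu" by (intro cg_mr t1)
  also have "\<dots> = uu ^ a * (bv t1 * uu)" by (simp add: mult.assoc)
  also have "\<dots> \<approx> uu ^ a * (uu * bv t2)" by (intro cg_ml t2)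
  also have "\<dots> = uu ^ Suc a * bv t2" by (simp only: power_Suc2 mult.assoc)
  finally show ?case by blast
qed

lemma Sp_bv: "z \<in> Sp \<Longrightarrow> bv t * z \<in> Sp"
proof (rule Sp_mult_left)
  fix a f b
  obtain t' where t': "bv t * uu ^ a \<approx> uu ^ a * bv t'" using bv_uu_pow by blast
  have "bv t * (uu ^ a * bv f * dd ^ b) = (bv t * uu ^ a) * bv f * dd ^ b" by (simp add: mult.assoc)
  also have "\<dots> \<approx> (uu ^ a * bv t') * bv f * dd ^ b" by (intro cg_mr t')
  also have "\<dots> = uu ^ a * (bv t' * bv f) * dd ^ b" by (simp add: mult.assoc)
  also have "\<dots> \<approx> uu ^ a * bv (t' * f) * dd ^ b" by (intro cg_mr cg_ml cg_sym[OF bv_mult])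
  finally show "bv t * (uu ^ a * bv f * dd ^ b) \<in> Sp" by (rule Sp.cgr[OF Sp.gen cg_sym])
qed

lemma Sp_hh: "z \<in> Sp \<Longrightarrow> hh * z \<in> Sp"
  using Sp_bv[of z "[:[:0, 1:]:]"] by (simp add: bv_const ph_x)

lemma Sp_dd_gen: "dd * (uu ^ a * bv f * dd ^ b) \<in> Sp"
proof (induction a arbitrary: f b)
  case 0
  obtain g where g: "dd * bv f \<approx> bv g * dd" using transport[of f] by blast
  have "dd * (uu ^ 0 * bv f * dd ^ b) = (dd * bv f) * dd ^ b" by (simp add: mult.assoc)
  also have "\<dots> \<approx> (bv g * dd) * dd ^ b" by (intro cg_mr g)
  also have "\<dots> = uu ^ 0 * bv g * dd ^ Suc b" by (simp add: mult.assoc)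
  finally show ?case by (rule Sp.cgr[OF Sp.gen cg_sym])
next
  case (Suc a)
  let ?Y = "uu ^ a * bv f * dd ^ b"
  have "dd * (uu ^ Suc a * bv f * dd ^ b) = (dd * uu) * ?Y" by (simp add: mult.assoc)
  also have "\<dots> \<approx> (sc s aa + ph \<phi>) * ?Y" by (intro cg_mr R3)
  also have "\<dots> = sc s (uu * (dd * ?Y)) + bv [:\<phi>:] * ?Y" by (simp add: bv_const algebra_simps)
  finally have e: "dd * (uu ^ Suc a * bv f * dd ^ b) \<approx> sc s (uu * (dd * ?Y)) + bv [:\<phi>:] * ?Y" .
  have "sc s (uu * (dd * ?Y)) + bv [:\<phi>:] * ?Y \<in> Sp"
    by (intro Sp.add Sp_sc Sp_uu Sp_bv Suc.IH Sp.gen)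
  thus ?case by (rule Sp.cgr[OF _ cg_sym[OF e]])
qed

lemma Sp_dd: "z \<in> Sp \<Longrightarrow> dd * z \<in> Sp"
  by (rule Sp_mult_left[OF Sp_dd_gen])

lemma Sp_wd: "wd w \<in> Sp"
proof (induction w)
  case Nil
  have "wd [] = uu ^ 0 * bv 1 * dd ^ 0" by (simp add: wd_Nil)
  thus ?case using Sp.gen by metis
next
  case (Cons g w)
  have e: "wd (g # w) = wd [g] * wd w" using wd_append[of "[g]" w] by simp
  show ?case
  proof (cases g)
    case U
    have "wd (g # w) = uu * wd w" using e U by (simp add: uu_def)
    thus ?thesis using Sp_uu[OF Cons.IH] by simp
  next
    case D
    have "wd (g # w) = dd * wd w" using e D by (simp add: dd_def)
    thus ?thesis using Sp_dd[OF Cons.IH] by simp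
  next
    case H
    have "wd (g # w) = hh * wd w" using e H by (simp add: hh_def)
    thus ?thesis using Sp_hh[OF Cons.IH] by simp
  qed
qed

lemma Sp_all: "z \<in> Sp"
  by (subst ffa_expand) (intro Sp_sum Sp_sc Sp_wd)

definition canon :: "(nat \<Rightarrow> nat \<Rightarrow> complex) \<Rightarrow> ffa" where
  "canon c = (\<Sum>a\<le>n. \<Sum>b\<le>n. sc (c a b) (uu ^ a * EE * dd ^ b))"

lemma canon_add: "canon c1 + canon c2 = canon (\<lambda>a b. c1 a b + c2 a b)"
  by (simp add: canon_def sum.distrib sc_add2)

lemma canon_zero: "canon (\<lambda>a b. 0) = 0"
  by (simp add: canon_def)

lemma sc_if: "sc (if P then c else 0) x = (if P then sc c x else 0)" by simp

lemma canon_single: "a \<le> n \<Longrightarrow> b \<le> n \<Longrightarrow>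
  sc c0 (uu ^ a * EE * dd ^ b) = canon (\<lambda>a' b'. if a' = a \<and> b' = b then c0 else 0)"
proof -
  assume h: "a \<le> n" "b \<le> n"
  have "canon (\<lambda>a' b'. if a' = a \<and> b' = b then c0 else 0) =
        (\<Sum>a'\<le>n. if a' = a then (\<Sum>b'\<le>n. if b' = b then sc c0 (uu ^ a' * EE * dd ^ b') else 0) else 0)"
    unfolding canon_def by (intro sum.cong refl) (auto simp: sc_if)
  also have "\<dots> = sc c0 (uu ^ a * EE * dd ^ b)" using h by (simp add: sum.delta sc_if)
  finally show ?thesis by simp
qed

lemma uu_big: "n < a \<Longrightarrow> uu ^ a * x \<in> Iset"
proof -
  assume "n < a"
  hence "a = Suc n + (a - Suc n)" by simp
  hence "uu ^ a = uu ^ (Suc n + (a - Suc n))" by (rule arg_cong)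
  hence "uu ^ a * x = uu ^ Suc n * (uu ^ (a - Suc n) * x)"
    by (simp only: power_add mult.assoc)
  thus ?thesis using uu_pow by (simp add: Iset_mult_right)
qed

lemma dd_big: "n < b \<Longrightarrow> x * dd ^ b \<in> Iset"
proof -
  assume "n < b"
  hence "b = (b - Suc n) + Suc n" by simp
  hence "dd ^ b = dd ^ ((b - Suc n) + Suc n)" by (rule arg_cong)
  hence "x * dd ^ b = (x * dd ^ (b - Suc n)) * dd ^ Suc n"
    by (simp only: power_add mult.assoc)
  thus ?thesis using dd_pow by (simp add: Iset_mult_left)
qed

lemma red: "Suc n \<le> a + k \<Longrightarrow> \<exists>c. uu ^ a * bv f * dd ^ b \<approx> canon c"
proof (induction k arbitrary: a f b)
  case 0
  hence "uu ^ a * (bv f * dd ^ b) \<in> Iset" by (intro uu_big) simp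
  hence "uu ^ a * bv f * dd ^ b \<approx> canon (\<lambda>a b. 0)" by (simp add: canon_zero cg_I mult.assoc)
  thus ?case by blast
next
  case (Suc k)
  show ?case
  proof (cases "n < a")
    case True
    hence "uu ^ a * (bv f * dd ^ b) \<in> Iset" by (intro uu_big)
    hence "uu ^ a * bv f * dd ^ b \<approx> canon (\<lambda>a b. 0)" by (simp add: canon_zero cg_I mult.assoc)
    thus ?thesis by blast
  next
    case False
    obtain c0 g where d: "bv f \<approx> sc c0 EE + uu * bv g * dd" using decomp by blast
    have "Suc n \<le> Suc a + k" using Suc.prems by simp
    then obtain c' where c': "uu ^ Suc a * bv g * dd ^ Suc b \<approx> canon c'"
      using Suc.IH[of "Suc a" g "Suc b"] by blast
    have "uu ^ a * bv f * dd ^ b \<approx> uu ^ a * (sc c0 EE + uu * bv g * dd) * dd ^ b"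
      by (intro cg_mr cg_ml d)
    also have "\<dots> = sc c0 (uu ^ a * EE * dd ^ b) + (uu ^ a * uu) * bv g * (dd * dd ^ b)"
      by (simp add: algebra_simps)
    also have "\<dots> = sc c0 (uu ^ a * EE * dd ^ b) + uu ^ Suc a * bv g * dd ^ Suc b"
      by (metis power_Suc power_Suc2)
    also have "\<dots> \<approx> sc c0 (uu ^ a * EE * dd ^ b) + canon c'" by (intro cg_add cg_refl c')
    finally have e: "uu ^ a * bv f * dd ^ b \<approx> sc c0 (uu ^ a * EE * dd ^ b) + canon c'" .
    show ?thesis
    proof (cases "n < b")
      case True
      have "sc c0 (uu ^ a * EE * dd ^ b) \<in> Iset" using True by (intro Iset_sc dd_big)
      hence "sc c0 (uu ^ a * EE * dd ^ b) + canon c' \<approx> 0 + canon c'" by (intro cg_add cg_I cg_refl)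
      hence "uu ^ a * bv f * dd ^ b \<approx> 0 + canon c'" by (rule cg_trans[OF e])
      thus ?thesis by auto
    next
      case False
      hence "sc c0 (uu ^ a * EE * dd ^ b) + canon c' = canon (\<lambda>a' b'. (if a' = a \<and> b' = b then c0 else 0) + c' a' b')"
        using \<open>\<not> n < a\<close> by (simp add: canon_single canon_add)
      thus ?thesis using e by auto
    qed
  qed
qed

lemma Sp_canon: "z \<in> Sp \<Longrightarrow> \<exists>c. z \<approx> canon c"
proof (induction rule: Sp.induct)
  case (gen a f b) thus ?case using red[of a "Suc n"] by simp
next
  case (add x y)
  then obtain c1 c2 where "x \<approx> canon c1" "y \<approx> canon c2" by blast
  hence "x + y \<approx> canon c1 + canon c2" by (rule cg_add)
  thus ?case by (metis canon_add)
next
  case (cgr x y) thus ?case by (meson cg_sym cg_trans)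
qed

lemma all_canon: "\<exists>c. z \<approx> canon c"
  using Sp_canon[OF Sp_all] .

end



context dua begin

abbreviation "ag \<equiv> act_gen r s \<gamma> \<phi> lam n"
abbreviation "aw \<equiv> act_word r s \<gamma> \<phi> lam n"
definition "actR z = act r s \<gamma> \<phi> lam n (rep z)"

lemma aw_Nil: "aw [] v = v" by (simp add: act_word_def)
lemma aw_Cons: "aw (g # w) v = ag g (aw w v)" by (simp add: act_word_def)
lemma aw_append: "aw (a @ b) v = aw a (aw b v)"
  by (induction a) (simp_all add: aw_Nil aw_Cons)

lemma ag_add: "ag g (\<lambda>i. v i + u i) = (\<lambda>j. ag g v j + ag g u j)"
  by (cases g) (auto simp: act_gen_def algebra_simps)
lemma ag_scale: "ag g (\<lambda>i. c * v i) = (\<lambda>j. c * ag g v j)"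
  by (cases g) (auto simp: act_gen_def algebra_simps)
lemma ag_zero: "ag g (\<lambda>i. 0) = (\<lambda>j. 0)"
  by (cases g) (auto simp: act_gen_def)

lemma aw_add: "aw w (\<lambda>i. v i + u i) = (\<lambda>j. aw w v j + aw w u j)"
  by (induction w) (simp_all add: aw_Nil aw_Cons ag_add)
lemma aw_scale: "aw w (\<lambda>i. c * v i) = (\<lambda>j. c * aw w v j)"
  by (induction w) (simp_all add: aw_Nil aw_Cons ag_scale)
lemma aw_zero: "aw w (\<lambda>i. 0) = (\<lambda>j. 0)"
  by (induction w) (simp_all add: aw_Nil aw_Cons ag_zero)
lemma aw_sum: "aw w (\<lambda>i. \<Sum>b\<in>B. F b i) j = (\<Sum>b\<in>B. aw w (F b) j)"
proof (induction B rule: infinite_finite_induct)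
  case (infinite A) thus ?case by (simp add: aw_zero)
next
  case empty thus ?case by (simp add: aw_zero)
next
  case (insert x F)
  have "aw w (\<lambda>i. \<Sum>b\<in>insert x F. F' b i) j = aw w (\<lambda>i. F' x i + (\<Sum>b\<in>F. F' b i)) j" for F'
    using insert by simp
  thus ?case using insert by (simp add: aw_add)
qed

lemma act_sup: "finite T \<Longrightarrow> {w. x w \<noteq> 0} \<subseteq> T \<Longrightarrow>
   act r s \<gamma> \<phi> lam n x v j = (\<Sum>w\<in>T. x w * aw w v j)"
  unfolding act_def by (rule sum.mono_neutral_left) auto

lemma fin_supp: "finite {w. rep z w \<noteq> 0}" using rep[of z] by (simp add: fa_finite_def)

lemma actR_add: "actR (x + y) v j = actR x v j + actR y v j"
proof -
  let ?T = "{w. rep x w \<noteq> 0} \<union> {w. rep y w \<noteq> 0}"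
  have T: "finite ?T" by (simp add: fin_supp)
  have "actR (x + y) v j = (\<Sum>w\<in>?T. rep (x + y) w * aw w v j)"
    unfolding actR_def by (rule act_sup[OF T]) (auto simp: rep_add fa_add_def)
  also have "\<dots> = (\<Sum>w\<in>?T. rep x w * aw w v j) + (\<Sum>w\<in>?T. rep y w * aw w v j)"
    by (simp add: rep_add fa_add_def distrib_right sum.distrib)
  also have "\<dots> = actR x v j + actR y v j"
    unfolding actR_def by (simp add: act_sup[OF T])
  finally show ?thesis .
qed

lemma actR_sc: "actR (sc c x) v j = c * actR x v j"
proof -
  let ?T = "{w. rep x w \<noteq> 0}"
  have T: "finite ?T" by (simp add: fin_supp)
  have "actR (sc c x) v j = (\<Sum>w\<in>?T. rep (sc c x) w * aw w v j)"
    unfolding actR_def by (rule act_sup[OF T]) (auto simp: rep_sc fa_smult_def)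
  also have "\<dots> = c * actR x v j"
    unfolding actR_def by (simp add: act_sup[OF T] rep_sc fa_smult_def sum_distrib_left mult.assoc)
  finally show ?thesis .
qed

lemma actR_zero: "actR 0 v j = 0"
  using actR_sc[of 0 0] by simp

lemma actR_sum: "actR (sum F B) v j = (\<Sum>b\<in>B. actR (F b) v j)"
  by (induction B rule: infinite_finite_induct) (simp_all add: actR_zero actR_add)

lemma actR_minus: "actR (- x) v j = - actR x v j"
  using actR_sc[of "-1" x] by (simp add: sc_neg)

lemma actR_diff: "actR (x - y) v j = actR x v j - actR y v j"
  by (simp only: diff_conv_add_uminus actR_add actR_minus)

lemma actR_wd: "actR (wd w) v j = aw w v j"
proof -
  have "actR (wd w) v j = (\<Sum>w'\<in>{w}. rep (wd w) w' * aw w' v j)"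
    unfolding actR_def by (rule act_sup) (auto simp: rep_wd fa_word_def)
  thus ?thesis by (simp add: rep_wd fa_word_def)
qed

lemma actR_expand: "actR z v j = (\<Sum>a\<in>{w. rep z w \<noteq> 0}. rep z a * aw a v j)"
  unfolding actR_def act_def by simp

end


context dua begin
lemma actR_mult: "actR (x * y) v j = actR x (actR y v) j"
proof -
  let ?A = "{w. rep x w \<noteq> 0}" and ?B = "{w. rep y w \<noteq> 0}"
  have "x * y = (\<Sum>a\<in>?A. sc (rep x a) (wd a)) * (\<Sum>b\<in>?B. sc (rep y b) (wd b))"
    using ffa_expand[of x] ffa_expand[of y] by simp
  also have "\<dots> = (\<Sum>a\<in>?A. \<Sum>b\<in>?B. sc (rep x a * rep y b) (wd a * wd b))"
    by (simp add: sum_product mult.commute)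
  also have "\<dots> = (\<Sum>a\<in>?A. \<Sum>b\<in>?B. sc (rep x a * rep y b) (wd (a @ b)))"
    by (simp add: wd_append)
  finally have "actR (x * y) v j = (\<Sum>a\<in>?A. \<Sum>b\<in>?B. rep x a * rep y b * aw (a @ b) v j)"
    by (simp add: actR_sum actR_sc actR_wd)
  also have "\<dots> = (\<Sum>a\<in>?A. rep x a * aw a (\<lambda>i. \<Sum>b\<in>?B. rep y b * aw b v i) j)"
    by (simp add: aw_sum aw_scale aw_append sum_distrib_left mult.assoc)
  also have "\<dots> = actR x (actR y v) j"
  proof -
    have "actR y v = (\<lambda>i. \<Sum>b\<in>?B. rep y b * aw b v i)" by (rule ext) (rule actR_expand)
    thus ?thesis by (simp add: actR_expand[of x])
  qed
  finally show ?thesis .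
qed

definition "supv v \<longleftrightarrow> (\<forall>j>n. v j = 0)"

lemma aw_supv: "supv v \<Longrightarrow> n < j \<Longrightarrow> aw w v j = 0"
  by (cases w) (auto simp: aw_Nil aw_Cons supv_def act_gen_def split: gen.splits)

lemma actR_supv: "supv v \<Longrightarrow> supv (actR z v)"
  unfolding supv_def by (auto simp: actR_expand aw_supv[unfolded supv_def])

end


context dua begin

lemma actR_mult_fun: "actR (x * y) v = actR x (actR y v)"
  by (rule ext) (rule actR_mult)

lemma act_uu: "actR uu v j = (if 1 \<le> j \<and> j \<le> n then v (j - 1) else 0)"
  by (simp add: uu_def actR_wd aw_Cons aw_Nil act_gen_def)
lemma act_dd: "actR dd v j = (if j < n then bt (Suc j) * v (Suc j) else 0)"
  by (simp add: dd_def actR_wd aw_Cons aw_Nil act_gen_def)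
lemma act_hh: "actR hh v j = (if j \<le> n then lm j * v j else 0)"
  by (simp add: hh_def actR_wd aw_Cons aw_Nil act_gen_def)
lemma act_one: "actR 1 v j = v j"
  by (simp add: wd_Nil[symmetric] actR_wd aw_Nil del: wd_Nil)

lemma act_ph: "supv v \<Longrightarrow> actR (ph p) v j = poly p (lm j) * v j"
proof (induction p arbitrary: j)
  case 0 thus ?case by (simp add: actR_zero)
next
  case (pCons a p)
  have "actR (ph (pCons a p)) v j = a * v j + actR hh (actR (ph p) v) j"
    by (simp add: ph_pCons actR_add actR_sc act_one actR_mult)
  also have "\<dots> = poly (pCons a p) (lm j) * v j"
    using pCons.prems by (auto simp: act_hh pCons.IH supv_def algebra_simps)
  finally show ?case .
qed

lemma act_aa: "supv v \<Longrightarrow> actR aa v j = bt j * v j"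
  by (cases j) (auto simp: actR_mult act_uu act_dd supv_def bt0)

lemma act_bv: "supv v \<Longrightarrow> actR (bv f) v j = poly2 f (lm j) (bt j) * v j"
proof (induction f arbitrary: v j)
  case 0 thus ?case by (simp add: actR_zero)
next
  case (pCons c f)
  have s: "supv (actR aa v)" by (rule actR_supv[OF pCons.prems])
  have "actR (bv (pCons c f)) v j = actR (ph c) v j + actR (bv f) (actR aa v) j"
    by (simp add: bv_pCons actR_add actR_mult)
  also have "\<dots> = poly2 (pCons c f) (lm j) (bt j) * v j"
    using pCons.prems by (simp add: act_ph pCons.IH[OF s] act_aa poly2_pCons algebra_simps)
  finally show ?case .
qed

lemma act_uu_pow: "supv v \<Longrightarrow> actR (uu ^ a) v j = (if a \<le> j \<and> j \<le> n then v (j - a) else 0)"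
proof (induction a arbitrary: j)
  case 0 thus ?case by (simp add: act_one supv_def)
next
  case (Suc a)
  have "actR (uu ^ Suc a) v j = actR uu (actR (uu ^ a) v) j" by (simp add: actR_mult)
  thus ?case using Suc by (auto simp: act_uu)
qed

definition "pb j b = (\<Prod>i<b. bt (Suc (j + i)))"

lemma act_dd_pow: "supv v \<Longrightarrow> actR (dd ^ b) v j = (if j + b \<le> n then pb j b * v (j + b) else 0)"
proof (induction b arbitrary: j)
  case 0 thus ?case by (simp add: act_one supv_def pb_def)
next
  case (Suc b)
  have pbs: "pb j (Suc b) = bt (Suc j) * pb (Suc j) b"
    unfolding pb_def by (subst prod.lessThan_Suc_shift) simp
  have "actR (dd ^ Suc b) v j = actR dd (actR (dd ^ b) v) j" by (simp add: actR_mult)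
  thus ?case using Suc by (auto simp: act_dd pbs)
qed

lemma pb_nz: "j + b \<le> n \<Longrightarrow> pb j b \<noteq> 0"
  unfolding pb_def using beta_nz by (auto simp: prod_zero_iff)

definition "delta k = (\<lambda>i. if i = k then (1::complex) else 0)"

lemma supv_delta: "k \<le> n \<Longrightarrow> supv (delta k)"
  by (auto simp: supv_def delta_def)

lemma act_basis:
  assumes "a \<le> n" "b \<le> n" "b' \<le> n"
  shows "actR (uu ^ a * EE * dd ^ b) (delta b') j = (if j = a \<and> b = b' then pb 0 b else 0)"
proof -
  define u1 where "u1 = actR (dd ^ b) (delta b')"
  have s1: "supv u1" unfolding u1_def by (intro actR_supv supv_delta assms)
  have u1: "u1 i = (if i + b = b' then pb i b else 0)" for i
  proof -
    have "u1 i = (if i + b \<le> n then pb i b * delta b' (i + b) else 0)"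
      unfolding u1_def by (rule act_dd_pow[OF supv_delta[OF assms(3)]])
    thus ?thesis using assms by (auto simp: delta_def)
  qed
  define u2 where "u2 = actR EE u1"
  have s2: "supv u2" unfolding u2_def by (intro actR_supv s1)
  have u2: "u2 i = (if i = 0 \<and> b = b' then pb 0 b else 0)" for i
  proof -
    have "u2 i = poly2 p0 (lm i) (bt i) * u1 i" unfolding u2_def EE_def by (rule act_bv[OF s1])
    also have "\<dots> = (if i = 0 \<and> b = b' then pb 0 b else 0)"
    proof (cases "i + b = b'")
      case True
      hence "i \<le> n" using assms by simp
      thus ?thesis using True by (auto simp: u1 p0_eval)
    next
      case False thus ?thesis by (auto simp: u1)
    qed
    finally show ?thesis .
  qed
  have "actR (uu ^ a * EE * dd ^ b) (delta b') j = actR (uu ^ a) u2 j"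
    by (simp add: actR_mult_fun u1_def u2_def)
  also have "\<dots> = (if j = a \<and> b = b' then pb 0 b else 0)"
    using assms by (auto simp: act_uu_pow[OF s2] u2)
  finally show ?thesis .
qed

lemma sum_mult_delta: "finite S \<Longrightarrow> (\<Sum>b\<in>S. (f b::complex) * (if b = b0 then g b else 0)) = (if b0 \<in> S then f b0 * g b0 else 0)"
proof -
  assume S: "finite S"
  have "(\<Sum>b\<in>S. f b * (if b = b0 then g b else 0)) = (\<Sum>b\<in>S. if b = b0 then f b * g b else 0)"
    by (rule sum.cong) auto
  thus ?thesis using S by (simp add: sum.delta)
qed

lemma act_canon: "a0 \<le> n \<Longrightarrow> b0 \<le> n \<Longrightarrow> actR (canon c) (delta b0) a0 = c a0 b0 * pb 0 b0"
proof -
  assume h: "a0 \<le> n" "b0 \<le> n"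
  have "actR (canon c) (delta b0) a0 = (\<Sum>a\<le>n. \<Sum>b\<le>n. c a b * (if a0 = a \<and> b = b0 then pb 0 b else 0))"
    unfolding canon_def using h by (simp add: actR_sum actR_sc act_basis)
  also have "\<dots> = (\<Sum>a\<le>n. if a = a0 then c a0 b0 * pb 0 b0 else 0)"
  proof (rule sum.cong[OF refl])
    fix a
    show "(\<Sum>b\<le>n. c a b * (if a0 = a \<and> b = b0 then pb 0 b else 0)) = (if a = a0 then c a0 b0 * pb 0 b0 else 0)"
    proof (cases "a = a0")
      case True
      hence "(\<Sum>b\<le>n. c a b * (if a0 = a \<and> b = b0 then pb 0 b else 0)) = (\<Sum>b\<le>n. c a b * (if b = b0 then pb 0 b else 0))"
        by simp
      also have "\<dots> = c a b0 * pb 0 b0" using h by (simp add: sum_mult_delta)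
      finally show ?thesis using True by simp
    next
      case False thus ?thesis by simp
    qed
  qed
  also have "\<dots> = c a0 b0 * pb 0 b0" using h by (simp add: sum.delta)
  finally show ?thesis .
qed

definition "annR = {z. \<forall>v. supv v \<longrightarrow> (\<forall>j. actR z v j = 0)}"

lemma canon_ann: "canon c \<in> annR \<Longrightarrow> canon c = 0"
proof -
  assume a: "canon c \<in> annR"
  have "c a b = 0" if "a \<le> n" "b \<le> n" for a b
  proof -
    have "actR (canon c) (delta b) a = 0" using a that supv_delta by (auto simp: annR_def)
    hence "c a b * pb 0 b = 0" using act_canon that by simp
    thus ?thesis using pb_nz[of 0 b] that by simp
  qed
  thus ?thesis unfolding canon_def by (simp)
qed

end


context dua begin

lemma rep_rel1: "rep (hh * uu - sc r (uu * hh) - sc \<gamma> uu) = fa_add (fa_word [H,U]) (fa_add (fa_smult (-r) (fa_word [U,H])) (fa_smult (-\<gamma>) (fa_word [U])))"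
proof -
  have "hh * uu - sc r (uu * hh) - sc \<gamma> uu = hh * uu + (sc (-r) (uu * hh) + sc (-\<gamma>) uu)"
    by (simp add: sc_neg)
  thus ?thesis by (simp only: rep_add rep_sc rep_mul hh_def uu_def rep_wd fa_word_mul) simp
qed

lemma rep_rel2: "rep (dd * hh - sc r (hh * dd) - sc \<gamma> dd) = fa_add (fa_word [D,H]) (fa_add (fa_smult (-r) (fa_word [H,D])) (fa_smult (-\<gamma>) (fa_word [D])))"
proof -
  have "dd * hh - sc r (hh * dd) - sc \<gamma> dd = dd * hh + (sc (-r) (hh * dd) + sc (-\<gamma>) dd)"
    by (simp add: sc_neg)
  thus ?thesis by (simp only: rep_add rep_sc rep_mul hh_def dd_def rep_wd fa_word_mul) simp
qed

lemma rep_rel3: "rep (dd * uu - sc s (uu * dd) - ph \<phi>) = fa_add (fa_word [D,U]) (fa_add (fa_smult (-s) (fa_word [U,D])) (fa_smult (-1) (fa_poly_h \<phi>)))"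
proof -
  have "dd * uu - sc s (uu * dd) - ph \<phi> = dd * uu + (sc (-s) (uu * dd) + sc (-1) (ph \<phi>))"
    by (simp add: sc_neg)
  thus ?thesis by (simp only: rep_add rep_sc rep_mul uu_def dd_def rep_wd fa_word_mul ph.rep_eq) simp
qed

lemma act_rel1: "actR (hh * uu - sc r (uu * hh) - sc \<gamma> uu) u j = 0"
proof -
  have e: "actR (hh * uu - sc r (uu * hh) - sc \<gamma> uu) u j = actR hh (actR uu u) j - r * actR uu (actR hh u) j - \<gamma> * actR uu u j"
    by (simp only: actR_diff actR_sc actR_mult)
  show ?thesis unfolding e by (cases j) (auto simp: act_uu act_hh wt_Suc algebra_simps)
qed

lemma act_rel2: "actR (dd * hh - sc r (hh * dd) - sc \<gamma> dd) u j = 0"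
proof -
  have e: "actR (dd * hh - sc r (hh * dd) - sc \<gamma> dd) u j = actR dd (actR hh u) j - r * actR hh (actR dd u) j - \<gamma> * actR dd u j"
    by (simp only: actR_diff actR_sc actR_mult)
  show ?thesis unfolding e by (cases "j < n") (auto simp: act_dd act_hh wt_Suc algebra_simps)
qed

lemma act_rel3: "supv u \<Longrightarrow> actR (dd * uu - sc s (uu * dd) - ph \<phi>) u j = 0"
proof -
  assume su: "supv u"
  have e0: "actR (dd * uu - sc s (uu * dd) - ph \<phi>) u j = actR dd (actR uu u) j - s * actR aa u j - actR (ph \<phi>) u j"
    by (simp only: actR_diff actR_sc actR_mult)
  have e: "actR (dd * uu - sc s (uu * dd) - ph \<phi>) u j =
     (if j < n then bt (Suc j) * u j else 0) - s * (bt j * u j) - poly \<phi> (lm j) * u j"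
    unfolding e0 using su by (simp add: act_aa act_ph act_dd act_uu)
  show ?thesis
  proof (cases "j < n")
    case True thus ?thesis unfolding e by (simp add: wt_Suc algebra_simps)
  next
    case False
    show ?thesis
    proof (cases "j = n")
      case True
      have z: "s * bt n + poly \<phi> (lm n) = 0" using beta_end by (simp add: wt_Suc)
      have "(if j < n then bt (Suc j) * u j else 0) - s * (bt j * u j) - poly \<phi> (lm j) * u j
            = - ((s * bt n + poly \<phi> (lm n)) * u n)" using True by (simp add: algebra_simps)
      thus ?thesis unfolding e z by simp
    next
      case False
      hence "u j = 0" using \<open>\<not> j < n\<close> su by (simp add: supv_def)
      thus ?thesis unfolding e using False \<open>\<not> j < n\<close> by simp
    qed
  qed
qed

lemma gen_ann: "g \<in> Gset \<Longrightarrow> supv u \<Longrightarrow> actR (Abs_ffa g) u j = 0"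
proof -
  assume g: "g \<in> Gset" and su: "supv u"
  have ab: "Abs_ffa (rep z) = z" for z by (rule rep_inverse)
  from g consider
      "g = rep (hh * uu - sc r (uu * hh) - sc \<gamma> uu)"
    | "g = rep (dd * hh - sc r (hh * dd) - sc \<gamma> dd)"
    | "g = rep (dd * uu - sc s (uu * dd) - ph \<phi>)"
    | "g = rep (uu ^ Suc n)"
    | "g = rep (dd ^ Suc n)"
    | f where "g = rep (bv f)" "\<forall>i\<le>n. poly2 f (lm i) (bt i) = 0"
  proof -
    assume c1: "g = rep (hh * uu - sc r (uu * hh) - sc \<gamma> uu) \<Longrightarrow> thesis"
      and c2: "g = rep (dd * hh - sc r (hh * dd) - sc \<gamma> dd) \<Longrightarrow> thesis"
      and c3: "g = rep (dd * uu - sc s (uu * dd) - ph \<phi>) \<Longrightarrow> thesis"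
      and c4: "g = rep (uu ^ Suc n) \<Longrightarrow> thesis"
      and c5: "g = rep (dd ^ Suc n) \<Longrightarrow> thesis"
      and c6: "\<And>f. g = rep (bv f) \<Longrightarrow> \<forall>i\<le>n. poly2 f (lm i) (bt i) = 0 \<Longrightarrow> thesis"
    have u: "rep (uu ^ Suc n) = fa_word (replicate (Suc n) U)"
      by (simp only: uu_def wd_replicate[symmetric] rep_wd)
    have d: "rep (dd ^ Suc n) = fa_word (replicate (Suc n) D)"
      by (simp only: dd_def wd_replicate[symmetric] rep_wd)
    show thesis using g unfolding Gset_def dua_rels_def
      using c1 c2 c3 c4 c5 c6 rep_rel1 rep_rel2 rep_rel3 u d bv.rep_eq by auto
  qed
  thus ?thesis
  proof cases
    case 1 thus ?thesis by (simp add: ab act_rel1)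
  next
    case 2 thus ?thesis by (simp add: ab act_rel2)
  next
    case 3 thus ?thesis using su by (simp add: ab act_rel3)
  next
    case 4 thus ?thesis using su by (auto simp: ab act_uu_pow simp del: power_Suc)
  next
    case 5 thus ?thesis using su by (simp add: ab act_dd_pow del: power_Suc)
  next
    case (6 f)
    show ?thesis
    proof (cases "j \<le> n")
      case True thus ?thesis using 6 su by (simp add: ab act_bv)
    next
      case False thus ?thesis using 6 su by (simp add: ab act_bv supv_def)
    qed
  qed
qed

lemma Abs_rep': "fa_finite x \<Longrightarrow> rep (Abs_ffa x) = x"
  by (simp add: Abs_ffa_inverse)

lemma ideal_ann: "x \<in> fa_ideal Gset \<Longrightarrow> supv v \<Longrightarrow> act r s \<gamma> \<phi> lam n x v j = 0"
proof (induction arbitrary: v j rule: fa_ideal.induct)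
  case zero thus ?case by (simp add: act_def fa_zero_def)
next
  case (gen g a b)
  have gf: "fa_finite g" using gen.hyps(1) by (rule Gset_finite)
  let ?A = "Abs_ffa a" and ?G = "Abs_ffa g" and ?B = "Abs_ffa b"
  have "fa_mul (fa_mul a g) b = rep (?A * ?G * ?B)"
    using gen.hyps gf by (simp add: rep_mul Abs_rep')
  hence "act r s \<gamma> \<phi> lam n (fa_mul (fa_mul a g) b) v j = actR ?A (actR ?G (actR ?B v)) j"
    by (simp add: actR_def[symmetric] actR_mult_fun)
  also have "actR ?G (actR ?B v) = (\<lambda>_. 0)"
    by (rule ext, rule gen_ann[OF gen.hyps(1) actR_supv[OF gen.prems]])
  also have "actR ?A (\<lambda>_. 0) j = 0" by (simp add: actR_expand aw_zero)
  finally show ?case .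
next
  case (add x y)
  have fx: "fa_finite x" "fa_finite y" using add.hyps fa_ideal_finite Gset_finite by blast+
  have "fa_add x y = rep (Abs_ffa x + Abs_ffa y)" using fx by (simp add: rep_add Abs_rep')
  hence "act r s \<gamma> \<phi> lam n (fa_add x y) v j = actR (Abs_ffa x) v j + actR (Abs_ffa y) v j"
    by (simp add: actR_def[symmetric] actR_add)
  also have "\<dots> = 0" using add.IH[OF add.prems] fx by (simp add: actR_def Abs_rep')
  finally show ?case .
qed

lemma Iset_annR: "z \<in> Iset \<Longrightarrow> z \<in> annR"
  unfolding annR_def Iset_def actR_def using ideal_ann by auto

lemma main: "ann_Fhw r s \<gamma> \<phi> lam n = fa_ideal Gset"
proof
  show "fa_ideal Gset \<subseteq> ann_Fhw r s \<gamma> \<phi> lam n"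
  proof
    fix x assume x: "x \<in> fa_ideal Gset"
    have "fa_finite x" using x fa_ideal_finite Gset_finite by blast
    moreover have "act r s \<gamma> \<phi> lam n x v = (\<lambda>_. 0)" if "\<forall>j>n. v j = 0" for v
      using ideal_ann[OF x] that by (auto simp: supv_def)
    ultimately show "x \<in> ann_Fhw r s \<gamma> \<phi> lam n" by (simp add: ann_Fhw_def)
  qed
next
  show "ann_Fhw r s \<gamma> \<phi> lam n \<subseteq> fa_ideal Gset"
  proof
    fix x assume x: "x \<in> ann_Fhw r s \<gamma> \<phi> lam n"
    hence fx: "fa_finite x" and ax: "\<And>v. supv v \<Longrightarrow> act r s \<gamma> \<phi> lam n x v = (\<lambda>_. 0)"
      by (auto simp: ann_Fhw_def supv_def)
    let ?Z = "Abs_ffa x"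
    have rz: "rep ?Z = x" using fx by (rule Abs_rep')
    have zA: "?Z \<in> annR" unfolding annR_def mem_Collect_eq actR_def rz
    proof (intro allI impI)
      fix v :: "nat \<Rightarrow> complex" and j assume "supv v"
      from fun_cong[OF ax[OF this], of j] show "act r s \<gamma> \<phi> lam n x v j = 0" by simp
    qed
    obtain c where c: "?Z \<approx> canon c" using all_canon by blast
    have dI: "?Z - canon c \<in> annR" using c by (intro Iset_annR) (simp add: cg_def)
    have "canon c \<in> annR"
      unfolding annR_def mem_Collect_eq
    proof (intro allI impI)
      fix v :: "nat \<Rightarrow> complex" and j assume "supv v"
      have "canon c = ?Z - (?Z - canon c)" by simp
      hence "actR (canon c) v j = actR ?Z v j - actR (?Z - canon c) v j"
        by (metis actR_diff)
      thus "actR (canon c) v j = 0" using zA dI \<open>supv v\<close> by (simp add: annR_def)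
    qed
    hence "canon c = 0" by (rule canon_ann)
    hence "?Z \<in> Iset" using c by (simp add: cg_def)
    thus "x \<in> fa_ideal Gset" using rz by (simp add: Iset_def)
  qed
qed

end

theorem mainTheorem1:
  fixes r s \<gamma> lam :: complex and \<phi> :: "complex poly" and n :: nat
  assumes "r \<noteq> 0" and "s \<noteq> 0"
    and "\<forall>i\<le>n. \<forall>j\<le>n. i \<noteq> j \<longrightarrow> wt r s \<gamma> \<phi> lam i \<noteq> wt r s \<gamma> \<phi> lam j"
    and "\<forall>i. 1 \<le> i \<and> i \<le> n \<longrightarrow> snd (wt r s \<gamma> \<phi> lam i) \<noteq> 0"
    and "snd (wt r s \<gamma> \<phi> lam (Suc n)) = 0"
  shows "ann_Fhw r s \<gamma> \<phi> lam n =
    fa_ideal (dua_rels r s \<gamma> \<phi> \<union>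
              {fa_word (replicate (Suc n) U), fa_word (replicate (Suc n) D)} \<union>
              {fa_biv f | f. \<forall>i\<le>n. poly2 f (fst (wt r s \<gamma> \<phi> lam i)) (snd (wt r s \<gamma> \<phi> lam i)) = 0})"
proof -
  interpret d: dua r s \<gamma> \<phi> lam n
    using assms(3-5) by unfold_locales
  show ?thesis using d.main unfolding d.Gset_def .
qed



end
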